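(* In the setting below, assume $\varphi(U)$ is an open box $\prod_{i=1}^n(-r_i,r_i)$. Then: (i) there exists a smooth $\hat h$ on $\varphi(U)$ satisfying $\frac{\partial\hat h}{\partial q^\mu}=u_\mu$ for all $\mu=1,\dots,n-m$ if and only if $\frac{\partial u_\nu}{\partial q^\mu}=\frac{\partial u_\mu}{\partial q^\nu}$ on $\varphi(U)$ for all $\mu,\nu\le n-m$ (equivalently, in coordinate-free terms, $\mathrm d\big(\mathrm dh\circ\mathbb F(\mathfrak K\circ\hat{\mathfrak p})\circ(\mathbb F\mathfrak H)^{-1}\big)(\mathsf u,\mathsf v)=0$ for all $\mathsf u,\mathsf v\in\mathbb F\mathfrak H(\hat W)$); (ii) in that case, for every constant $\varpi$, the function $$\hat h(q^1,\dots,q^n)=\sum_{\mu=1}^{n-m}\int_0^{q^\mu}u_\mu(0,\dots,0,t,q^{\mu+1},\dots,q^n)\,\mathrm dt+\frac{\varpi}{2}\sum_{a=1}^m(q^{n-m+a})^2$$ (with $t$ in the $\mu$-th slot) is such a solution; (iii) a solution $\hat h$ having $\mathbf 0$ as a critical point with positive-definite Hessian exists if and only if the matrix $\mathbb M_{\mu\nu}:=\frac{\partial u_\nu}{\partial q^\mu}(\mathbf 0)=\frac{\partial^2h}{\partial q^\mu\partial q^k}(\mathbf 0)\hat{\mathbb P}^{k\tau}(\mathbf 0)\mathbb K_{\tau\nu}(\mathbf 0)$ is positive-definite; and when $\mathbb M$ is positive-definite with least eigenvalue $\lambda_{\min}$, the function in (ii) has this property as soon as $$\varpi>\frac{1}{\lambda_{\min}}\sum_{\mu=1}^{n-m}\sum_{a=1}^m\Big(\frac{\partial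 u_\mu}{\partial q^{n-m+a}}(\mathbf 0)\Big)^2.$$
   Context: Setting: $\mathfrak H$ is a quadratic form on $T^*Q$ ($Q$ a smooth $n$-manifold), i.e. $\mathfrak H(\alpha)=\tfrac12\langle\alpha,\rho^\sharp(\alpha)\rangle$ for a smooth positive-definite fibered inner product $\rho$ on $TQ$; $\mathbb F\mathfrak H=\rho^\sharp:T^*Q\to TQ$ is its fiber derivative ($\langle\beta,\mathbb Ff(\alpha)\rangle=\frac{d}{dt}f(\alpha+t\beta)|_{t=0}$ for smooth $f$ on $T^*Q$). $h:Q\to\mathbb R$ is smooth, $W\subseteq T^*Q$ is a subbundle of rank $m$, $1\le m<n$. $q_0$ is a critical point of $h$ and $(U,\varphi=(q^1,\dots,q^n))$ is a chart with $\varphi(q_0)=\mathbf 0$ such that $\hat W:=(\mathbb F\mathfrak H)^{-1}(\mathrm{span}\{\partial/\partial q^1,\dots,\partial/\partial q^{n-m}\})$ is a complement of $W$ on $U$, with $\hat{\mathfrak p}$ the projection onto $\hat W$ along $W$. $\mathfrak K$ is a quadratic form on $\hat W$ (in applications a solution of the kinetic equation $\{\mathfrak K\circ\hat{\mathfrak p},\mathfrak H\}|_{\hat W}=0$, $\{\cdot,\cdot\}$ the canonical Poisson bracket). The equation $\partial\hat h/\partial q^\mu=u_\mu$ is the local form of the potential matching equation $\big(\mathrm d\hat h\circ\mathbb F\mathfrak H-\mathrm dh\circ\mathbb F(\mathfrak K\circ\hat{\mathfrak p})\big)(\sigma)=0$ for all $\sigma\in\hat W$. Indices: $k\in\{1,\dots,n\}$,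 Greek indices in $\{1,\dots,n-m\}$, $a\in\{1,\dots,m\}$, summation over repeated indices. $\mathbb H_{ij}:=\langle(\mathbb F\mathfrak H)^{-1}(\partial/\partial q^i),\partial/\partial q^j\rangle$; $\sigma_\mu:=\mathbb H_{\mu k}\mathrm dq^k$ is a basis of $\hat W$; $\hat{\mathbb P}^{k\mu}$ is defined by $\hat{\mathfrak p}(\mathrm dq^k)=\hat{\mathbb P}^{k\mu}\sigma_\mu$; $\mathbb K_{\mu\nu}$ is defined by $\mathfrak K(a^\mu\sigma_\mu)=\tfrac12\mathbb K_{\mu\nu}a^\mu a^\nu$. Functions on $U$ are identified with their local representatives, and $u_\mu:=\frac{\partial h}{\partial q^k}\hat{\mathbb P}^{k\tau}\mathbb K_{\tau\mu}$. *)

theory Defs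
  imports "HOL-Analysis.Analysis"
begin

text \<open>Points of the chart image are modelled as functions nat => real; coordinates
  q^1..q^n of the paper are the indices 0..n-1 (0-based), all coordinates with index
  >= n are 0. The topology on nat => real is the product topology (Function_Topology).\<close>

type_synonym pt = "nat \<Rightarrow> real"

definition box_n :: "nat \<Rightarrow> (nat \<Rightarrow> real) \<Rightarrow> pt set" where
  "box_n n r = {x. (\<forall>i<n. - r i < x i \<and> x i < r i) \<and> (\<forall>i\<ge>n. x i = 0)}"

definition pd :: "nat \<Rightarrow> (pt \<Rightarrow> real) \<Rightarrow> pt \<Rightarrow> real" where
  "pd i f x = deriv (\<lambda>t. f (x(i := t))) (x i)"

fun iter_pd :: "nat list \<Rightarrow> (pt \<Rightarrow> real) \<Rightarrow> pt \<Rightarrow> real" where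
  "iter_pd [] f = f"
| "iter_pd (i # is) f = pd i (iter_pd is f)"

definition smooth_on :: "nat \<Rightarrow> pt set \<Rightarrow> (pt \<Rightarrow> real) \<Rightarrow> bool" where
  "smooth_on n S f \<longleftrightarrow>
     (\<forall>is. set is \<subseteq> {..<n} \<longrightarrow>
        continuous_on S (iter_pd is f) \<and>
        (\<forall>i<n. \<forall>x\<in>S. (\<lambda>t. iter_pd is f (x(i := t))) differentiable (at (x i))))"

definition oint :: "real \<Rightarrow> real \<Rightarrow> (real \<Rightarrow> real) \<Rightarrow> real" where
  "oint a b f = (if a \<le> b then integral {a..b} f else - integral {b..a} f)"

text \<open>u_mu = (dh/dq^k) P^{k tau} K_{tau mu}; P k tau, K tau mu are the local
  representatives of hat-P^{k tau} and K_{tau mu}.\<close>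
definition uloc :: "nat \<Rightarrow> nat \<Rightarrow> (pt \<Rightarrow> real) \<Rightarrow> (nat \<Rightarrow> nat \<Rightarrow> pt \<Rightarrow> real)
    \<Rightarrow> (nat \<Rightarrow> nat \<Rightarrow> pt \<Rightarrow> real) \<Rightarrow> nat \<Rightarrow> pt \<Rightarrow> real" where
  "uloc n m h P K \<mu> x = (\<Sum>k<n. \<Sum>\<tau><n-m. pd k h x * P k \<tau> x * K \<tau> \<mu> x)"

definition hhat :: "nat \<Rightarrow> nat \<Rightarrow> (nat \<Rightarrow> pt \<Rightarrow> real) \<Rightarrow> real \<Rightarrow> pt \<Rightarrow> real" where
  "hhat n m u w x =
     (\<Sum>\<mu><n-m. oint 0 (x \<mu>)
         (\<lambda>t. u \<mu> (\<lambda>i. if i < \<mu> then 0 else if i = \<mu> then t else x i)))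
     + w / 2 * (\<Sum>a<m. (x (n - m + a))^2)"

definition posdef :: "nat \<Rightarrow> (nat \<Rightarrow> nat \<Rightarrow> real) \<Rightarrow> bool" where
  "posdef d A \<longleftrightarrow> (\<forall>i<d. \<forall>j<d. A i j = A j i) \<and>
     (\<forall>v. (\<exists>i<d. v i \<noteq> 0) \<longrightarrow> (\<Sum>i<d. \<Sum>j<d. v i * A i j * v j) > 0)"

definition eigenvalues :: "nat \<Rightarrow> (nat \<Rightarrow> nat \<Rightarrow> real) \<Rightarrow> real set" where
  "eigenvalues d A = {l. \<exists>v. (\<exists>i<d. v i \<noteq> 0) \<and> (\<forall>i<d. (\<Sum>j<d. A i j * v j) = l * v i)}"

definition lambda_min :: "nat \<Rightarrow> (nat \<Rightarrow> nat \<Rightarrow> real) \<Rightarrow> real" where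
  "lambda_min d A = Min (eigenvalues d A)"

end

theory Submission
  imports Defs "Jordan_Normal_Form.Char_Poly"
begin

lemma iter_pd_append: "iter_pd (is @ [i]) f = iter_pd is (pd i f)"
  by (induction "is") auto

definition lineC :: "nat \<Rightarrow> (nat \<Rightarrow> real) \<Rightarrow> (pt \<Rightarrow> real) \<Rightarrow> bool" where
  "lineC n r g \<longleftrightarrow> continuous_on (box_n n r) g \<and>
     (\<forall>i<n. \<forall>x\<in>box_n n r. (\<lambda>t. g (x(i := t))) differentiable (at (x i)))"

definition Dk :: "nat \<Rightarrow> (nat \<Rightarrow> real) \<Rightarrow> nat \<Rightarrow> (pt \<Rightarrow> real) \<Rightarrow> bool" where
  "Dk n r k f \<longleftrightarrow> (\<forall>is. set is \<subseteq> {..<n} \<longrightarrow> length is \<le> k \<longrightarrow> lineC n r (iter_pd is f))"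

lemma smooth_Dk: "smooth_on n (box_n n r) f \<longleftrightarrow> (\<forall>k. Dk n r k f)"
  unfolding smooth_on_def Dk_def lineC_def by (metis le_refl)

lemma Dk_mono: "Dk n r k' f \<Longrightarrow> k \<le> k' \<Longrightarrow> Dk n r k f"
  unfolding Dk_def by auto

lemma Dk_0: "Dk n r 0 f \<longleftrightarrow> lineC n r f"
  unfolding Dk_def by auto

lemma Dk_Suc: "Dk n r (Suc k) f \<longleftrightarrow> lineC n r f \<and> (\<forall>i<n. Dk n r k (pd i f))"
proof
  assume H: "Dk n r (Suc k) f"
  show "lineC n r f \<and> (\<forall>i<n. Dk n r k (pd i f))"
  proof
    show "lineC n r f" using H[unfolded Dk_def, rule_format, of "[]"] by simp
    show "\<forall>i<n. Dk n r k (pd i f)"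
      unfolding Dk_def
    proof (intro allI impI)
      fix i "is" assume "i < n" "set is \<subseteq> {..<n}" "length is \<le> k"
      then show "lineC n r (iter_pd is (pd i f))"
        using H[unfolded Dk_def, rule_format, of "is @ [i]"] by (simp add: iter_pd_append)
    qed
  qed
next
  assume H: "lineC n r f \<and> (\<forall>i<n. Dk n r k (pd i f))"
  show "Dk n r (Suc k) f"
    unfolding Dk_def
  proof (intro allI impI)
    fix "is" :: "nat list" assume a: "set is \<subseteq> {..<n}" "length is \<le> Suc k"
    show "lineC n r (iter_pd is f)"
    proof (cases "is" rule: rev_cases)
      case Nil then show ?thesis using H by simp
    next
      case (snoc js i)
      then show ?thesis using a H unfolding Dk_def by (auto simp: iter_pd_append)
    qed
  qed
qed

locale bx =
  fixes n :: nat and r :: "nat \<Rightarrow> real"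
  assumes rpos: "\<forall>i<n. 0 < r i"
begin

abbreviation "B \<equiv> box_n n r"

lemma box_coord: "x \<in> B \<Longrightarrow> i < n \<Longrightarrow> - r i < x i \<and> x i < r i"
  unfolding box_n_def by auto

lemma box_hi: "x \<in> B \<Longrightarrow> n \<le> i \<Longrightarrow> x i = 0"
  unfolding box_n_def by auto

lemma box_upd: "x \<in> B \<Longrightarrow> i < n \<Longrightarrow> - r i < t \<Longrightarrow> t < r i \<Longrightarrow> x(i := t) \<in> B"
  unfolding box_n_def by auto

lemma zero_in_box: "(\<lambda>_. 0) \<in> B"
  using rpos unfolding box_n_def by auto

lemma box_ev: "x \<in> B \<Longrightarrow> i < n \<Longrightarrow> eventually (\<lambda>t. x(i := t) \<in> B) (nhds (x i))"
proof -
  assume x: "x \<in> B" and i: "i < n"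
  have "open {-r i <..< r i}" by simp
  moreover have "x i \<in> {-r i <..< r i}" using box_coord[OF x i] by simp
  ultimately have "eventually (\<lambda>t. t \<in> {-r i <..< r i}) (nhds (x i))"
    using eventually_nhds_in_open by blast
  then show ?thesis by eventually_elim (use x i box_upd in auto)
qed

lemma pd_cong: "(\<And>y. y \<in> B \<Longrightarrow> f y = g y) \<Longrightarrow> x \<in> B \<Longrightarrow> i < n \<Longrightarrow> pd i f x = pd i g x"
  unfolding pd_def
  by (rule deriv_cong_ev[OF _ refl]) (use box_ev in \<open>fastforce elim: eventually_mono\<close>)

lemma iter_pd_cong: "set is \<subseteq> {..<n} \<Longrightarrow> (\<And>y. y \<in> B \<Longrightarrow> f y = g y) \<Longrightarrow> x \<in> B
   \<Longrightarrow> iter_pd is f x = iter_pd is g x"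
proof (induction "is" arbitrary: x)
  case Nil then show ?case by simp
next
  case (Cons i js)
  then show ?case by (auto intro!: pd_cong)
qed

lemma lineC_deriv: "lineC n r f \<Longrightarrow> x \<in> B \<Longrightarrow> i < n \<Longrightarrow>
   ((\<lambda>t. f (x(i := t))) has_real_derivative pd i f x) (at (x i))"
  unfolding lineC_def pd_def using DERIV_deriv_iff_real_differentiable by blast

lemma lineC_cong: assumes "\<And>y. y \<in> B \<Longrightarrow> f y = g y" "lineC n r f" shows "lineC n r g"
  unfolding lineC_def
proof
  show "continuous_on B g" using assms continuous_on_cong unfolding lineC_def by blast
  show "\<forall>i<n. \<forall>x\<in>B. (\<lambda>t. g (x(i := t))) differentiable at (x i)"
  proof (intro allI impI ballI)
    fix i x assume i: "i < n" and x: "x \<in> B"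
    have ev: "eventually (\<lambda>t. f (x(i := t)) = g (x(i := t))) (nhds (x i))"
      using box_ev[OF x i] by eventually_elim (use assms in auto)
    have "((\<lambda>t. g (x(i := t))) has_real_derivative pd i f x) (at (x i))"
      using lineC_deriv[OF assms(2) x i] DERIV_cong_ev[OF refl ev refl] by blast
    then show "(\<lambda>t. g (x(i := t))) differentiable at (x i)"
      using real_differentiable_def by blast
  qed
qed

lemma Dk_cong: "(\<And>y. y \<in> B \<Longrightarrow> f y = g y) \<Longrightarrow> Dk n r k f \<Longrightarrow> Dk n r k g"
  unfolding Dk_def
proof (intro allI impI)
  fix "is" assume e: "\<And>y. y \<in> B \<Longrightarrow> f y = g y" and H: "\<forall>is. set is \<subseteq> {..<n} \<longrightarrow> length is \<le> k \<longrightarrow> lineC n r (iter_pd is f)"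
    and a: "set is \<subseteq> {..<n}" "length is \<le> k"
  show "lineC n r (iter_pd is g)"
    by (rule lineC_cong[OF _ H[rule_format, OF a]]) (rule iter_pd_cong[OF a(1) e])
qed

lemma lineC_add: "lineC n r f \<Longrightarrow> lineC n r g \<Longrightarrow> lineC n r (\<lambda>x. f x + g x)"
  unfolding lineC_def by (auto intro: continuous_on_add)

lemma lineC_mult: "lineC n r f \<Longrightarrow> lineC n r g \<Longrightarrow> lineC n r (\<lambda>x. f x * g x)"
  unfolding lineC_def by (auto intro: continuous_on_mult)

lemma lineC_const: "lineC n r (\<lambda>x. c)"
  unfolding lineC_def by auto

lemma pd_add: "lineC n r f \<Longrightarrow> lineC n r g \<Longrightarrow> x \<in> B \<Longrightarrow> i < n \<Longrightarrow>
   pd i (\<lambda>x. f x + g x) x = pd i f x + pd i g x"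
  by (unfold pd_def[of i "\<lambda>x. f x + g x"], rule DERIV_imp_deriv,
      rule DERIV_add[OF lineC_deriv lineC_deriv]) auto

lemma pd_mult: "lineC n r f \<Longrightarrow> lineC n r g \<Longrightarrow> x \<in> B \<Longrightarrow> i < n \<Longrightarrow>
   pd i (\<lambda>x. f x * g x) x = pd i f x * g x + f x * pd i g x"
proof -
  assume a: "lineC n r f" "lineC n r g" "x \<in> B" "i < n"
  have "((\<lambda>t. f (x(i := t)) * g (x(i := t))) has_real_derivative
     pd i f x * g x + f x * pd i g x) (at (x i))"
    using DERIV_mult[OF lineC_deriv[OF a(1,3,4)] lineC_deriv[OF a(2,3,4)]] by (simp add: algebra_simps)
  then show ?thesis unfolding pd_def[of i "\<lambda>x. f x * g x"] by (simp add: DERIV_imp_deriv)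
qed

lemma pd_const: "pd i (\<lambda>x. c) x = 0"
  unfolding pd_def by simp

lemma Dk_const: "Dk n r k (\<lambda>x. c)"
proof (induction k arbitrary: c)
  case 0 then show ?case by (simp add: Dk_0 lineC_const)
next
  case (Suc k)
  have e: "pd i (\<lambda>x. c) = (\<lambda>x. 0)" for i by (rule ext) (simp add: pd_const)
  show ?case unfolding Dk_Suc e using Suc by (simp add: lineC_const)
qed

end

definition Zm :: "nat \<Rightarrow> pt \<Rightarrow> pt" where
  "Zm \<mu> x = (\<lambda>i. if i < \<mu> then 0 else x i)"

context bx begin

lemma Dk_add: "Dk n r k f \<Longrightarrow> Dk n r k g \<Longrightarrow> Dk n r k (\<lambda>x. f x + g x)"
proof (induction k arbitrary: f g)
  case 0 then show ?case by (simp add: Dk_0 lineC_add)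
next
  case (Suc k)
  from Suc.prems have lf: "lineC n r f" and lg: "lineC n r g"
    and pf: "\<And>i. i < n \<Longrightarrow> Dk n r k (pd i f)" and pg: "\<And>i. i < n \<Longrightarrow> Dk n r k (pd i g)"
    by (auto simp: Dk_Suc)
  show ?case unfolding Dk_Suc
  proof (intro conjI allI impI)
    show "lineC n r (\<lambda>x. f x + g x)" using lf lg by (rule lineC_add)
    fix i assume i: "i < n"
    show "Dk n r k (pd i (\<lambda>x. f x + g x))"
      by (rule Dk_cong[OF _ Suc.IH[OF pf[OF i] pg[OF i]]]) (simp add: pd_add[OF lf lg _ i])
  qed
qed

lemma Dk_mult: "Dk n r k f \<Longrightarrow> Dk n r k g \<Longrightarrow> Dk n r k (\<lambda>x. f x * g x)"
proof (induction k arbitrary: f g)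
  case 0 then show ?case by (simp add: Dk_0 lineC_mult)
next
  case (Suc k)
  from Suc.prems have lf: "lineC n r f" and lg: "lineC n r g"
    and pf: "\<And>i. i < n \<Longrightarrow> Dk n r k (pd i f)" and pg: "\<And>i. i < n \<Longrightarrow> Dk n r k (pd i g)"
    by (auto simp: Dk_Suc)
  have f': "Dk n r k f" by (rule Dk_mono[OF Suc.prems(1)]) simp
  have g': "Dk n r k g" by (rule Dk_mono[OF Suc.prems(2)]) simp
  show ?case unfolding Dk_Suc
  proof (intro conjI allI impI)
    show "lineC n r (\<lambda>x. f x * g x)" using lf lg by (rule lineC_mult)
    fix i assume i: "i < n"
    show "Dk n r k (pd i (\<lambda>x. f x * g x))"
      by (rule Dk_cong[OF _ Dk_add[OF Suc.IH[OF pf[OF i] g'] Suc.IH[OF f' pg[OF i]]]])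
        (simp add: pd_mult[OF lf lg _ i])
  qed
qed

lemma Dk_sum: "finite A \<Longrightarrow> (\<And>a. a \<in> A \<Longrightarrow> Dk n r k (F a)) \<Longrightarrow> Dk n r k (\<lambda>x. \<Sum>a\<in>A. F a x)"
proof (induction A rule: finite_induct)
  case empty then show ?case by (simp add: Dk_const)
next
  case (insert a A)
  then show ?case by (simp add: Dk_add)
qed

lemma lineC_sum: "finite A \<Longrightarrow> (\<And>a. a \<in> A \<Longrightarrow> lineC n r (F a)) \<Longrightarrow> lineC n r (\<lambda>x. \<Sum>a\<in>A. F a x)"
  using Dk_sum[of A 0 F] by (simp add: Dk_0)

lemma pd_sum: assumes "finite A" "\<And>a. a \<in> A \<Longrightarrow> lineC n r (F a)" "x \<in> B" "i < n"
  shows "pd i (\<lambda>x. \<Sum>a\<in>A. F a x) x = (\<Sum>a\<in>A. pd i (F a) x)"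
proof -
  have "((\<lambda>t. \<Sum>a\<in>A. F a (x(i := t))) has_real_derivative (\<Sum>a\<in>A. pd i (F a) x)) (at (x i))"
    by (rule DERIV_sum, rule lineC_deriv) (use assms in auto)
  then show ?thesis unfolding pd_def[of i "\<lambda>x. \<Sum>a\<in>A. F a x"] by (rule DERIV_imp_deriv)
qed

lemma pd_coord: "pd i (\<lambda>x. x j) x = (if i = j then 1 else 0)"
  unfolding pd_def by (cases "i = j") auto

lemma lineC_coord: "lineC n r (\<lambda>x. x j)"
  unfolding lineC_def
proof
  show "continuous_on B (\<lambda>x. x j)"
    by (rule continuous_on_subset[OF continuous_on_product_coordinates]) simp
  show "\<forall>i<n. \<forall>x\<in>B. (\<lambda>t. (x(i := t)) j) differentiable at (x i)"
  proof (intro allI impI ballI)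
    fix i x
    show "(\<lambda>t. (x(i := t)) j) differentiable at (x i)"
    proof (cases "i = j")
      case True
      then have "(\<lambda>t. (x(i := t)) j) = (\<lambda>t. t)" by auto
      then show ?thesis by simp
    next
      case False
      then have "(\<lambda>t. (x(i := t)) j) = (\<lambda>t. x j)" by auto
      then show ?thesis by simp
    qed
  qed
qed

lemma Dk_coord: "Dk n r k (\<lambda>x. x j)"
proof (cases k)
  case 0 then show ?thesis by (simp add: Dk_0 lineC_coord)
next
  case (Suc k')
  have e: "pd i (\<lambda>x. x j) = (\<lambda>x. if i = j then 1 else 0)" for i by (rule ext) (simp add: pd_coord)
  show ?thesis unfolding Suc Dk_Suc e by (simp add: lineC_coord Dk_const)
qed

lemma Zm_box: "x \<in> B \<Longrightarrow> Zm \<mu> x \<in> B"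
  using rpos unfolding box_n_def Zm_def by auto

lemma Zm_cont: "continuous_on S (Zm \<mu>)"
  unfolding Zm_def
proof (intro continuous_on_coordinatewise_then_product)
  fix i
  show "continuous_on S (\<lambda>x. if i < \<mu> then 0 else x i)"
    by (cases "i < \<mu>") (auto intro: continuous_on_subset[OF continuous_on_product_coordinates])
qed

lemma Zm_upd: "\<not> i < \<mu> \<Longrightarrow> Zm \<mu> (x(i := t)) = (Zm \<mu> x)(i := t)"
  unfolding Zm_def by auto

lemma Zm_upd_low: "i < \<mu> \<Longrightarrow> Zm \<mu> (x(i := t)) = Zm \<mu> x"
  unfolding Zm_def by auto

lemma lineC_comp: assumes "lineC n r u" shows "lineC n r (\<lambda>x. u (Zm \<mu> x))"
  unfolding lineC_def
proof
  show "continuous_on B (\<lambda>x. u (Zm \<mu> x))"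
    using assms unfolding lineC_def
    by (intro continuous_on_compose2[OF _ Zm_cont]) (auto simp: Zm_box)
  show "\<forall>i<n. \<forall>x\<in>B. (\<lambda>t. u (Zm \<mu> (x(i := t)))) differentiable at (x i)"
  proof (intro allI impI ballI)
    fix i x assume i: "i < n" and x: "x \<in> B"
    show "(\<lambda>t. u (Zm \<mu> (x(i := t)))) differentiable at (x i)"
    proof (cases "i < \<mu>")
      case True then show ?thesis by (simp add: Zm_upd_low)
    next
      case False
      have "(\<lambda>t. u ((Zm \<mu> x)(i := t))) differentiable at ((Zm \<mu> x) i)"
        using assms Zm_box[OF x] i unfolding lineC_def by blast
      then show ?thesis using False by (simp add: Zm_upd) (simp add: Zm_def)
    qed
  qed
qed

lemma pd_comp: "pd i (\<lambda>x. u (Zm \<mu> x)) x = (if i < \<mu> then 0 else pd i u (Zm \<mu> x))"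
proof (cases "i < \<mu>")
  case True
  then show ?thesis unfolding pd_def by (simp add: Zm_upd_low)
next
  case False
  then have "Zm \<mu> x i = x i" by (simp add: Zm_def)
  with False show ?thesis unfolding pd_def by (simp add: Zm_upd)
qed

lemma Dk_comp: "Dk n r k u \<Longrightarrow> Dk n r k (\<lambda>x. u (Zm \<mu> x))"
proof (induction k arbitrary: u)
  case 0 then show ?case by (simp add: Dk_0 lineC_comp)
next
  case (Suc k)
  show ?case unfolding Dk_Suc
  proof (intro conjI allI impI)
    show "lineC n r (\<lambda>x. u (Zm \<mu> x))" using Suc.prems by (simp add: Dk_Suc lineC_comp)
    fix i assume i: "i < n"
    show "Dk n r k (pd i (\<lambda>x. u (Zm \<mu> x)))"
    proof (cases "i < \<mu>")
      case True
      have "pd i (\<lambda>x. u (Zm \<mu> x)) = (\<lambda>x. 0)" using True by (intro ext) (simp add: pd_comp)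
      then show ?thesis by (simp add: Dk_const)
    next
      case False
      have "pd i (\<lambda>x. u (Zm \<mu> x)) = (\<lambda>x. pd i u (Zm \<mu> x))" using False by (intro ext) (simp add: pd_comp)
      then show ?thesis using Suc.IH Suc.prems i by (simp add: Dk_Suc)
    qed
  qed
qed

end

lemma img_div_pos: assumes "(a::real) > 0" shows "(\<lambda>x. x / a) ` {0..a} = {0..1}"
proof
  show "(\<lambda>x. x / a) ` {0..a} \<subseteq> {0..1}" using assms by (auto simp: divide_simps)
  show "{0..1} \<subseteq> (\<lambda>x. x / a) ` {0..a}"
  proof
    fix y :: real assume y: "y \<in> {0..1}"
    have "y = (a * y) / a" using assms by simp
    moreover have "a * y \<in> {0..a}" using y assms by (auto simp: mult_le_cancel_left1)
    ultimately show "y \<in> (\<lambda>x. x / a) ` {0..a}" by blast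
  qed
qed

lemma img_div_neg: assumes "(a::real) < 0" shows "(\<lambda>x. x / a) ` {a..0} = {0..1}"
proof
  show "(\<lambda>x. x / a) ` {a..0} \<subseteq> {0..1}" using assms by (auto simp: divide_simps)
  show "{0..1} \<subseteq> (\<lambda>x. x / a) ` {a..0}"
  proof
    fix y :: real assume y: "y \<in> {0..1}"
    have "y = (a * y) / a" using assms by simp
    moreover have "a * y \<in> {a..0}"
    proof -
      have "a * 1 \<le> a * y" using y assms by (intro mult_left_mono_neg) auto
      moreover have "a * y \<le> 0" using y assms by (intro mult_nonpos_nonneg) auto
      ultimately show ?thesis by simp
    qed
    ultimately show "y \<in> (\<lambda>x. x / a) ` {a..0}" by blast
  qed
qed

lemma oint_stretch: "oint 0 a g = a * integral {0..1} (\<lambda>s. g (a * s))"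
proof (cases a "0::real" rule: linorder_cases)
  case less
  have "integral ((\<lambda>x. x / a) ` {a..0}) (\<lambda>x. g (a * x)) = (1 / \<bar>a\<bar>) *\<^sub>R integral {a..0} g"
    using less by (intro integral_stretch_real) simp
  then have "integral {0..1} (\<lambda>x. g (a * x)) = - (1 / a) * integral {a..0} g"
    using less by (simp add: img_div_neg)
  then show ?thesis using less by (simp add: oint_def)
next
  case equal then show ?thesis by (simp add: oint_def)
next
  case greater
  have "integral ((\<lambda>x. x / a) ` {0..a}) (\<lambda>x. g (a * x)) = (1 / \<bar>a\<bar>) *\<^sub>R integral {0..a} g"
    using greater by (intro integral_stretch_real) simp
  then have "integral {0..1} (\<lambda>x. g (a * x)) = (1 / a) * integral {0..a} g"
    using greater by (simp add: img_div_pos)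
  then show ?thesis using greater by (simp add: oint_def)
qed

lemma oint_split: assumes "continuous_on {c..d} g" "c \<le> 0" "0 \<le> d" "b \<in> {c..d}"
  shows "oint 0 b g = integral {c..b} g - integral {c..0} g"
proof (cases "0 \<le> b")
  case True
  have "integral {c..0} g + integral {0..b} g = integral {c..b} g"
    by (rule Henstock_Kurzweil_Integration.integral_combine) (use assms True in auto, rule integrable_continuous_interval, rule continuous_on_subset[OF assms(1)], use assms True in auto)
  then show ?thesis using True by (simp add: oint_def)
next
  case False
  have "integral {c..b} g + integral {b..0} g = integral {c..0} g"
    by (rule Henstock_Kurzweil_Integration.integral_combine) (use assms False in auto, rule integrable_continuous_interval, rule continuous_on_subset[OF assms(1)], use assms False in auto)
  then show ?thesis using False by (simp add: oint_def)
qed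

lemma oint_deriv:
  assumes g: "continuous_on {-R<..<R} g" and a: "a \<in> {-R<..<R}" and R: "R > 0"
  shows "((\<lambda>b. oint 0 b g) has_real_derivative g a) (at a)"
proof -
  define c where "c = (min a 0 - R) / 2"
  define d where "d = (max a 0 + R) / 2"
  have cd: "-R < c" "c < min a 0" "max a 0 < d" "d < R" using a R by (auto simp: c_def d_def)
  have gc: "continuous_on {c..d} g" by (rule continuous_on_subset[OF g]) (use cd in auto)
  have "((\<lambda>b. integral {c..b} g) has_real_derivative g a) (at a within {c..d})"
    by (rule integral_has_real_derivative[OF gc]) (use cd in auto)
  then have "((\<lambda>b. integral {c..b} g) has_real_derivative g a) (at a)"
    using cd by (simp add: at_within_Icc_at)
  then have D: "((\<lambda>b. integral {c..b} g - integral {c..0} g) has_real_derivative g a) (at a)"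
    using DERIV_diff[OF _ DERIV_const] by fastforce
  have "eventually (\<lambda>b. b \<in> {c<..<d}) (nhds a)"
    using cd by (intro eventually_nhds_in_open) auto
  then have ev: "eventually (\<lambda>b. oint 0 b g = integral {c..b} g - integral {c..0} g) (nhds a)"
    by eventually_elim (use cd gc in \<open>auto intro!: oint_split\<close>)
  show ?thesis by (rule DERIV_cong_ev[OF refl ev refl, THEN iffD2, OF D])
qed

lemma oint_ftc:
  assumes d: "\<And>t. t \<in> {min 0 a..max 0 a} \<Longrightarrow> (f has_real_derivative f' t) (at t)"
  shows "oint 0 a f' = f a - f 0"
proof (cases "0 \<le> a")
  case True
  have "(f' has_integral (f a - f 0)) {0..a}"
    by (rule fundamental_theorem_of_calculus[OF True])
       (use d True in \<open>auto simp: has_real_derivative_iff_has_vector_derivative[symmetric]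
          intro: has_field_derivative_at_within\<close>)
  then show ?thesis using True by (simp add: oint_def integral_unique)
next
  case False
  have "(f' has_integral (f 0 - f a)) {a..0}"
    by (rule fundamental_theorem_of_calculus)
       (use d False in \<open>auto simp: has_real_derivative_iff_has_vector_derivative[symmetric]
          intro: has_field_derivative_at_within\<close>)
  then show ?thesis using False by (simp add: oint_def integral_unique)
qed

lemma leib_aux:
  fixes K K1 :: "real \<Rightarrow> real \<Rightarrow> real" and lo hi :: real
  assumes d': "\<And>s t. s \<in> U \<Longrightarrow> t \<in> cbox lo hi \<Longrightarrow> ((\<lambda>s. K s t) has_field_derivative K1 s t) (at s within U)"
  and i': "\<And>s. s \<in> U \<Longrightarrow> K s integrable_on cbox lo hi"
  and c1': "continuous_on (U \<times> cbox lo hi) (\<lambda>(s, t). K1 s t)"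
  and U: "s0 \<in> U" "convex U"
  shows "((\<lambda>s. integral (cbox lo hi) (K s)) has_field_derivative integral (cbox lo hi) (K1 s0)) (at s0 within U)"
  thm leibniz_rule_field_derivative[of U lo hi K K1 s0]
  by (rule leibniz_rule_field_derivative[of U lo hi K K1 s0, OF d' i' c1' U])

lemma oint_leibniz:
  fixes K K1 :: "real \<Rightarrow> real \<Rightarrow> real"
  assumes U: "s0 \<in> U" "open U" "convex U"
    and d: "\<And>s t. s \<in> U \<Longrightarrow> t \<in> {min 0 a..max 0 a} \<Longrightarrow> ((\<lambda>s. K s t) has_real_derivative K1 s t) (at s)"
    and c1: "continuous_on (U \<times> {min 0 a..max 0 a}) (\<lambda>(s, t). K1 s t)"
    and c0: "\<And>s. s \<in> U \<Longrightarrow> continuous_on {min 0 a..max 0 a} (K s)"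
  shows "((\<lambda>s. oint 0 a (K s)) has_real_derivative oint 0 a (K1 s0)) (at s0)"
proof -
  have cb: "cbox (min 0 a) (max 0 a) = {min 0 a..max 0 a}" by (simp add: box_real)
  have d': "\<And>s t. s \<in> U \<Longrightarrow> t \<in> cbox (min 0 a) (max 0 a) \<Longrightarrow> ((\<lambda>s. K s t) has_real_derivative K1 s t) (at s within U)"
    unfolding cb by (rule has_field_derivative_at_within, rule d)
  have i': "\<And>s. s \<in> U \<Longrightarrow> K s integrable_on cbox (min 0 a) (max 0 a)"
    unfolding cb by (rule integrable_continuous_interval, rule c0)
  have c1': "continuous_on (U \<times> cbox (min 0 a) (max 0 a)) (\<lambda>(s, t). K1 s t)"
    unfolding cb by (rule c1)
  have F: "((\<lambda>s. integral (cbox (min 0 a) (max 0 a)) (K s)) has_real_derivative integral (cbox (min 0 a) (max 0 a)) (K1 s0)) (at s0 within U)"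
    by (rule leib_aux[OF d' i' c1' U(1) U(3)])
  have D0: "((\<lambda>s. integral (cbox (min 0 a) (max 0 a)) (K s)) has_real_derivative integral (cbox (min 0 a) (max 0 a)) (K1 s0)) (at s0)"
    using F by (subst (asm) at_within_open[OF U(1) U(2)])
  have D: "((\<lambda>s. integral {min 0 a..max 0 a} (K s)) has_real_derivative integral {min 0 a..max 0 a} (K1 s0)) (at s0)"
    using D0 unfolding cb .
  show ?thesis
  proof (cases "0 \<le> a")
    case True
    then show ?thesis using D by (simp add: oint_def)
  next
    case False
    then show ?thesis using DERIV_minus[OF D] by (simp add: oint_def)
  qed
qed

definition Ig :: "nat \<Rightarrow> (pt \<Rightarrow> real) \<Rightarrow> pt \<Rightarrow> real" where
  "Ig \<mu> H x = oint 0 (x \<mu>) (\<lambda>t. H (x(\<mu> := t)))"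

lemma cont_coord_fst: "continuous_on S (\<lambda>p. fst p i :: real)"
  by (rule continuous_on_compose2[OF continuous_on_product_coordinates continuous_on_fst]) auto

lemma cont_upd: "continuous_on S (\<lambda>p::real. x(\<mu> := p))"
proof (intro continuous_on_coordinatewise_then_product)
  fix i show "continuous_on S (\<lambda>p. (x(\<mu> := p)) i)"
    by (cases "i = \<mu>") (auto intro: continuous_on_id)
qed

lemma cont_upd2: "continuous_on S (\<lambda>p::real\<times>real. x(j := fst p, \<mu> := snd p))"
proof (intro continuous_on_coordinatewise_then_product)
  fix i show "continuous_on S (\<lambda>p::real\<times>real. (x(j := fst p, \<mu> := snd p)) i)"
    by (cases "i = \<mu>"; cases "i = j") (auto intro: continuous_on_fst continuous_on_snd continuous_on_id)
qed

lemma cont_upd3: "continuous_on S (\<lambda>p::pt\<times>real. (fst p)(\<mu> := fst p \<mu> * snd p))"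
proof (intro continuous_on_coordinatewise_then_product)
  fix i show "continuous_on S (\<lambda>p::pt\<times>real. ((fst p)(\<mu> := fst p \<mu> * snd p)) i)"
  proof (cases "i = \<mu>")
    case True
    then show ?thesis by (auto intro!: continuous_on_mult cont_coord_fst continuous_on_snd continuous_on_id)
  next
    case False
    then show ?thesis by (auto intro!: cont_coord_fst)
  qed
qed

lemma Ig_zero: "Ig \<mu> (\<lambda>x. 0) x = 0"
  unfolding Ig_def oint_def by simp

context bx begin

lemma seg_in: "x \<in> B \<Longrightarrow> \<mu> < n \<Longrightarrow> t \<in> {min 0 (x \<mu>)..max 0 (x \<mu>)} \<Longrightarrow> - r \<mu> < t \<and> t < r \<mu>"
  using box_coord[of x \<mu>] rpos by auto

lemma Ig_cont: assumes H: "continuous_on B H" and mu: "\<mu> < n" shows "continuous_on B (Ig \<mu> H)"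
proof -
  have e: "Ig \<mu> H = (\<lambda>x. x \<mu> * integral (cbox 0 1) (\<lambda>s. H (x(\<mu> := x \<mu> * s))))"
    by (rule ext) (simp add: Ig_def oint_stretch box_real)
  have img: "(\<lambda>p::pt\<times>real. (fst p)(\<mu> := fst p \<mu> * snd p)) ` (B \<times> cbox 0 1) \<subseteq> B"
  proof
    fix y assume "y \<in> (\<lambda>p::pt\<times>real. (fst p)(\<mu> := fst p \<mu> * snd p)) ` (B \<times> cbox 0 1)"
    then obtain x s where xs: "x \<in> B" "s \<in> {0..1}" and y: "y = x(\<mu> := x \<mu> * s)"
      by (auto simp: box_real)
    have b: "- r \<mu> < x \<mu>" "x \<mu> < r \<mu>" using box_coord[OF xs(1) mu] by auto
    have "\<bar>x \<mu> * s\<bar> \<le> \<bar>x \<mu>\<bar>" using xs(2) by (auto simp: abs_mult mult_left_le)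
    then have "- r \<mu> < x \<mu> * s \<and> x \<mu> * s < r \<mu>" using b by auto
    then show "y \<in> B" using y box_upd[OF xs(1) mu] by auto
  qed
  have cf: "continuous_on (B \<times> cbox 0 1) (\<lambda>p::pt\<times>real. H ((fst p)(\<mu> := fst p \<mu> * snd p)))"
    by (rule continuous_on_compose2[OF H cont_upd3 img])
  have cf': "continuous_on (B \<times> cbox 0 1) (\<lambda>(x, s). H (x(\<mu> := x \<mu> * s)))"
    using cf by (simp add: case_prod_beta)
  have "continuous_on B (\<lambda>x. integral (cbox 0 1) (\<lambda>s. H (x(\<mu> := x \<mu> * s))))"
    by (rule integral_continuous_on_param[OF cf'])
  then show ?thesis unfolding e
    by (intro continuous_on_mult continuous_on_subset[OF continuous_on_product_coordinates]) auto
qed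

lemma cont_line: assumes H: "continuous_on B H" and x: "x \<in> B" and mu: "\<mu> < n"
  shows "continuous_on {-r \<mu><..<r \<mu>} (\<lambda>t. H (x(\<mu> := t)))"
  by (rule continuous_on_compose2[OF H cont_upd]) (use box_upd[OF x mu] in auto)

lemma Ig_dmu: assumes H: "continuous_on B H" and mu: "\<mu> < n" and x: "x \<in> B"
  shows "((\<lambda>t. Ig \<mu> H (x(\<mu> := t))) has_real_derivative H x) (at (x \<mu>))"
proof -
  have e: "(\<lambda>t. Ig \<mu> H (x(\<mu> := t))) = (\<lambda>b. oint 0 b (\<lambda>t. H (x(\<mu> := t))))"
    by (rule ext) (simp add: Ig_def)
  have "((\<lambda>b. oint 0 b (\<lambda>t. H (x(\<mu> := t)))) has_real_derivative H (x(\<mu> := x \<mu>))) (at (x \<mu>))"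
    by (rule oint_deriv[OF cont_line[OF H x mu]]) (use box_coord[OF x mu] rpos mu in auto)
  then show ?thesis unfolding e by simp
qed

lemma Ig_dj: assumes H: "lineC n r H" and Hj: "continuous_on B (pd j H)"
  and j: "j < n" and mu: "\<mu> < n" and jm: "j \<noteq> \<mu>" and x: "x \<in> B"
  shows "((\<lambda>s. Ig \<mu> H (x(j := s))) has_real_derivative Ig \<mu> (pd j H) x) (at (x j))"
proof -
  define K where "K = (\<lambda>s t. H (x(j := s, \<mu> := t)))"
  define K1 where "K1 = (\<lambda>s t. pd j H (x(j := s, \<mu> := t)))"
  define U where "U = {-r j<..<r j}"
  define a where "a = x \<mu>"
  have e1: "(\<lambda>s. Ig \<mu> H (x(j := s))) = (\<lambda>s. oint 0 a (K s))"
    using jm by (intro ext) (simp add: Ig_def K_def a_def)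
  have e2: "Ig \<mu> (pd j H) x = oint 0 a (K1 (x j))"
    by (simp add: Ig_def K1_def a_def)
  have inB: "x(j := s, \<mu> := t) \<in> B" if "s \<in> U" "t \<in> {min 0 a..max 0 a}" for s t
  proof -
    have "x(j := s) \<in> B" using box_upd[OF x j] that(1) by (simp add: U_def)
    moreover have "(x(j := s)) \<mu> = x \<mu>" using jm by simp
    ultimately show ?thesis using box_upd[of "x(j := s)" \<mu> t] seg_in[OF x mu] that(2) mu
      by (simp add: a_def)
  qed
  have img: "(\<lambda>p::real\<times>real. x(j := fst p, \<mu> := snd p)) ` (U \<times> {min 0 a..max 0 a}) \<subseteq> B"
    using inB by auto
  show ?thesis unfolding e1 e2
  proof (rule oint_leibniz)
    show "x j \<in> U" using box_coord[OF x j] by (simp add: U_def)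
    show "open U" "convex U" by (auto simp: U_def)
    fix s t assume st: "s \<in> U" "t \<in> {min 0 a..max 0 a}"
    have y: "x(j := s, \<mu> := t) \<in> B" by (rule inB[OF st])
    have "((\<lambda>s'. H ((x(j := s, \<mu> := t))(j := s'))) has_real_derivative pd j H (x(j := s, \<mu> := t))) (at ((x(j := s, \<mu> := t)) j))"
      by (rule lineC_deriv[OF H y j])
    moreover have "(\<lambda>s'. H ((x(j := s, \<mu> := t))(j := s'))) = (\<lambda>s'. K s' t)"
      by (rule ext) (simp add: K_def fun_upd_twist[OF jm])
    moreover have "(x(j := s, \<mu> := t)) j = s" using jm by simp
    ultimately show "((\<lambda>s. K s t) has_real_derivative K1 s t) (at s)" by (simp add: K1_def)
  next
    show "continuous_on (U \<times> {min 0 a..max 0 a}) (\<lambda>(s, t). K1 s t)"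
      unfolding K1_def case_prod_beta
      by (rule continuous_on_compose2[OF Hj cont_upd2 img])
  next
    fix s assume s: "s \<in> U"
    have img': "(\<lambda>t. x(j := s, \<mu> := t)) ` {min 0 a..max 0 a} \<subseteq> B" using inB[OF s] by auto
    show "continuous_on {min 0 a..max 0 a} (K s)"
      unfolding K_def by (rule continuous_on_compose2[OF _ cont_upd img']) (use H in \<open>simp add: lineC_def\<close>)
  qed
qed

lemma lineC_Ig: assumes H: "lineC n r H" and Hj: "\<And>j. j < n \<Longrightarrow> continuous_on B (pd j H)"
  and mu: "\<mu> < n"
  shows "lineC n r (Ig \<mu> H)"
  unfolding lineC_def
proof
  show "continuous_on B (Ig \<mu> H)" using H mu by (intro Ig_cont) (simp add: lineC_def)
  show "\<forall>i<n. \<forall>x\<in>B. (\<lambda>t. Ig \<mu> H (x(i := t))) differentiable at (x i)"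
  proof (intro allI impI ballI)
    fix i x assume i: "i < n" and x: "x \<in> B"
    show "(\<lambda>t. Ig \<mu> H (x(i := t))) differentiable at (x i)"
    proof (cases "i = \<mu>")
      case True
      then show ?thesis using Ig_dmu[OF _ mu x] H real_differentiable_def
        by (metis lineC_def)
    next
      case False
      then show ?thesis using Ig_dj[OF H Hj[OF i] i mu False x] real_differentiable_def by blast
    qed
  qed
qed

lemma pd_Ig_mu: "continuous_on B H \<Longrightarrow> \<mu> < n \<Longrightarrow> x \<in> B \<Longrightarrow> pd \<mu> (Ig \<mu> H) x = H x"
  unfolding pd_def by (rule DERIV_imp_deriv, rule Ig_dmu)

lemma pd_Ig_j: "lineC n r H \<Longrightarrow> continuous_on B (pd j H) \<Longrightarrow> j < n \<Longrightarrow> \<mu> < n \<Longrightarrow> j \<noteq> \<mu> \<Longrightarrow> x \<in> B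
   \<Longrightarrow> pd j (Ig \<mu> H) x = Ig \<mu> (pd j H) x"
  unfolding pd_def[of j "Ig \<mu> H"] by (rule DERIV_imp_deriv, rule Ig_dj)

lemma Dk_Ig: "Dk n r (Suc k) H \<Longrightarrow> \<mu> < n \<Longrightarrow> Dk n r k (Ig \<mu> H)"
proof (induction k arbitrary: H)
  case 0
  have H: "lineC n r H" and Hj: "\<And>j. j < n \<Longrightarrow> lineC n r (pd j H)"
    using "0.prems"(1) by (auto simp: Dk_Suc Dk_0)
  show ?case unfolding Dk_0
    by (rule lineC_Ig[OF H _ "0.prems"(2)]) (use Hj in \<open>simp add: lineC_def\<close>)
next
  case (Suc k)
  have mu: "\<mu> < n" by (rule Suc.prems(2))
  have H: "lineC n r H" and Hj: "\<And>j. j < n \<Longrightarrow> Dk n r (Suc k) (pd j H)"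
    using Suc.prems(1) by (auto simp: Dk_Suc)
  have Hjc: "\<And>j. j < n \<Longrightarrow> continuous_on B (pd j H)"
    using Hj by (auto simp: Dk_Suc lineC_def)
  have Hk: "Dk n r k H" by (rule Dk_mono[OF Suc.prems(1)]) simp
  show ?case unfolding Dk_Suc
  proof (intro conjI allI impI)
    show "lineC n r (Ig \<mu> H)" by (rule lineC_Ig[OF H Hjc mu])
    fix i assume i: "i < n"
    show "Dk n r k (pd i (Ig \<mu> H))"
    proof (cases "i = \<mu>")
      case True
      show ?thesis
        by (rule Dk_cong[OF _ Hk]) (use H mu True in \<open>simp add: pd_Ig_mu lineC_def\<close>)
    next
      case False
      show ?thesis
        by (rule Dk_cong[OF _ Suc.IH[OF Hj[OF i] mu]]) (use H Hjc i mu False in \<open>simp add: pd_Ig_j\<close>)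
    qed
  qed
qed

lemma smooth_Ig: "smooth_on n B H \<Longrightarrow> \<mu> < n \<Longrightarrow> smooth_on n B (Ig \<mu> H)"
  unfolding smooth_Dk using Dk_Ig by blast

end

lemma near_pair:
  fixes a b :: real and g :: "real \<Rightarrow> real \<Rightarrow> real"
  assumes c: "continuous (at (a, b)) (\<lambda>p. g (fst p) (snd p))" and e: "e > 0"
  obtains d where "d > 0" "\<And>s t. \<bar>s - a\<bar> < d \<Longrightarrow> \<bar>t - b\<bar> < d \<Longrightarrow> \<bar>g s t - g a b\<bar> < e"
proof -
  obtain d0 where d0: "d0 > 0" "\<And>p. dist p (a, b) < d0 \<Longrightarrow> dist (g (fst p) (snd p)) (g a b) < e"
    using c e unfolding continuous_at_eps_delta by fastforce
  show ?thesis
  proof (rule that[of "d0 / 2"])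
    show "d0 / 2 > 0" using d0 by simp
    fix s t assume st: "\<bar>s - a\<bar> < d0 / 2" "\<bar>t - b\<bar> < d0 / 2"
    have "dist (s, t) (a, b) = sqrt ((s - a)\<^sup>2 + (t - b)\<^sup>2)"
      by (simp add: dist_Pair_Pair dist_real_def)
    also have "\<dots> \<le> \<bar>s - a\<bar> + \<bar>t - b\<bar>" by (rule sqrt_sum_squares_le_sum_abs)
    also have "\<dots> < d0" using st by simp
    finally have "dist (g s t) (g a b) < e" using d0(2)[of "(s, t)"] by simp
    then show "\<bar>g s t - g a b\<bar> < e" by (simp add: dist_real_def)
  qed
qed

lemma clairaut2:
  fixes f f1 f2 f12 f21 :: "real \<Rightarrow> real \<Rightarrow> real"
  assumes \<delta>: "\<delta> > 0"
    and d1: "\<And>s t. \<bar>s - a\<bar> < \<delta> \<Longrightarrow> \<bar>t - b\<bar> < \<delta> \<Longrightarrow> ((\<lambda>s. f s t) has_real_derivative f1 s t) (at s)"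
    and d2: "\<And>s t. \<bar>s - a\<bar> < \<delta> \<Longrightarrow> \<bar>t - b\<bar> < \<delta> \<Longrightarrow> ((\<lambda>t. f s t) has_real_derivative f2 s t) (at t)"
    and d12: "\<And>s t. \<bar>s - a\<bar> < \<delta> \<Longrightarrow> \<bar>t - b\<bar> < \<delta> \<Longrightarrow> ((\<lambda>t. f1 s t) has_real_derivative f12 s t) (at t)"
    and d21: "\<And>s t. \<bar>s - a\<bar> < \<delta> \<Longrightarrow> \<bar>t - b\<bar> < \<delta> \<Longrightarrow> ((\<lambda>s. f2 s t) has_real_derivative f21 s t) (at s)"
    and c12: "continuous (at (a, b)) (\<lambda>p. f12 (fst p) (snd p))"
    and c21: "continuous (at (a, b)) (\<lambda>p. f21 (fst p) (snd p))"
  shows "f12 a b = f21 a b"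
proof -
  have key: "\<bar>f12 a b - f21 a b\<bar> \<le> 2 * e" if e: "e > 0" for e
  proof -
    obtain e1 where e1: "e1 > 0" "\<And>s t. \<bar>s - a\<bar> < e1 \<Longrightarrow> \<bar>t - b\<bar> < e1 \<Longrightarrow> \<bar>f12 s t - f12 a b\<bar> < e"
      using near_pair[OF c12 e] by blast
    obtain e2 where e2: "e2 > 0" "\<And>s t. \<bar>s - a\<bar> < e2 \<Longrightarrow> \<bar>t - b\<bar> < e2 \<Longrightarrow> \<bar>f21 s t - f21 a b\<bar> < e"
      using near_pair[OF c21 e] by blast
    define h where "h = min \<delta> (min e1 e2) / 2"
    have h: "h > 0" "h < \<delta>" "h < e1" "h < e2" using \<delta> e1 e2 by (auto simp: h_def)
    define A where "A = f (a + h) (b + h) - f (a + h) b - f a (b + h) + f a b"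
    obtain \<xi> where \<xi>: "a < \<xi>" "\<xi> < a + h"
      and A1: "(f (a + h) (b + h) - f (a + h) b) - (f a (b + h) - f a b) = ((a + h) - a) * (f1 \<xi> (b + h) - f1 \<xi> b)"
    proof -
      have "\<exists>z. a < z \<and> z < a + h \<and> (f (a + h) (b + h) - f (a + h) b) - (f a (b + h) - f a b) = ((a + h) - a) * (f1 z (b + h) - f1 z b)"
        by (rule MVT2[where f = "\<lambda>s. f s (b + h) - f s b"]) (use h in \<open>auto intro!: DERIV_diff d1\<close>)
      then show ?thesis using that by blast
    qed
    obtain \<eta> where \<eta>: "b < \<eta>" "\<eta> < b + h" and B1: "f1 \<xi> (b + h) - f1 \<xi> b = ((b + h) - b) * f12 \<xi> \<eta>"
    proof -
      have "\<exists>z. b < z \<and> z < b + h \<and> f1 \<xi> (b + h) - f1 \<xi> b = ((b + h) - b) * f12 \<xi> z"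
        by (rule MVT2[where f = "\<lambda>t. f1 \<xi> t"]) (use h \<xi> in \<open>auto intro!: d12\<close>)
      then show ?thesis using that by blast
    qed
    obtain \<eta>' where \<eta>': "b < \<eta>'" "\<eta>' < b + h"
      and A2: "(f (a + h) (b + h) - f a (b + h)) - (f (a + h) b - f a b) = ((b + h) - b) * (f2 (a + h) \<eta>' - f2 a \<eta>')"
    proof -
      have "\<exists>z. b < z \<and> z < b + h \<and> (f (a + h) (b + h) - f a (b + h)) - (f (a + h) b - f a b) = ((b + h) - b) * (f2 (a + h) z - f2 a z)"
        by (rule MVT2[where f = "\<lambda>t. f (a + h) t - f a t"]) (use h in \<open>auto intro!: DERIV_diff d2\<close>)
      then show ?thesis using that by blast
    qed
    obtain \<xi>' where \<xi>': "a < \<xi>'" "\<xi>' < a + h" and B2: "f2 (a + h) \<eta>' - f2 a \<eta>' = ((a + h) - a) * f21 \<xi>' \<eta>'"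
    proof -
      have "\<exists>z. a < z \<and> z < a + h \<and> f2 (a + h) \<eta>' - f2 a \<eta>' = ((a + h) - a) * f21 z \<eta>'"
        by (rule MVT2[where f = "\<lambda>s. f2 s \<eta>'"]) (use h \<eta>' in \<open>auto intro!: d21\<close>)
      then show ?thesis using that by blast
    qed
    have "h * (h * f12 \<xi> \<eta>) = h * (h * f21 \<xi>' \<eta>')"
      using A1 B1 A2 B2 by (simp add: algebra_simps)
    then have eq: "f12 \<xi> \<eta> = f21 \<xi>' \<eta>'" using h by simp
    have "\<bar>f12 \<xi> \<eta> - f12 a b\<bar> < e" using e1(2) \<xi> \<eta> h by auto
    moreover have "\<bar>f21 \<xi>' \<eta>' - f21 a b\<bar> < e" using e2(2) \<xi>' \<eta>' h by auto
    ultimately show ?thesis using eq by linarith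
  qed
  show ?thesis
  proof (rule ccontr)
    assume "f12 a b \<noteq> f21 a b"
    then have p: "\<bar>f12 a b - f21 a b\<bar> / 4 > 0" by simp
    define X where "X = \<bar>f12 a b - f21 a b\<bar>"
    have "X \<le> 2 * (X / 4)" "0 < X / 4" using key[OF p] p by (simp_all add: X_def)
    then show False by linarith
  qed
qed

context bx begin

lemma clairaut:
  assumes F: "Dk n r 2 F" and i: "i < n" and j: "j < n" and x: "x \<in> B"
  shows "pd j (pd i F) x = pd i (pd j F) x"
proof (cases "i = j")
  case True then show ?thesis by simp
next
  case False
  have ij: "i \<noteq> j" by fact
  have lF: "lineC n r F" and lFi: "lineC n r (pd i F)" and lFj: "lineC n r (pd j F)"
    and lFij: "lineC n r (pd j (pd i F))" and lFji: "lineC n r (pd i (pd j F))"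
    using F i j by (auto simp: numeral_2_eq_2 Dk_Suc Dk_0)
  define \<delta> where "\<delta> = min (r i - \<bar>x i\<bar>) (r j - \<bar>x j\<bar>)"
  have \<delta>: "\<delta> > 0" using box_coord[OF x i] box_coord[OF x j] by (auto simp: \<delta>_def)
  define P where "P = (\<lambda>s t. x(i := s, j := t))"
  have PB: "P s t \<in> B" if "\<bar>s - x i\<bar> < \<delta>" "\<bar>t - x j\<bar> < \<delta>" for s t
  proof -
    have "- r i < s \<and> s < r i" "- r j < t \<and> t < r j" using that by (auto simp: \<delta>_def)
    then show ?thesis unfolding P_def using box_upd[OF box_upd[OF x i] j] by auto
  qed
  have Pi: "(P s t)(i := s') = P s' t" for s t s' by (simp add: P_def fun_upd_twist[OF ij])
  have Pj: "(P s t)(j := t') = P s t'" for s t t' by (simp add: P_def)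
  have Pvi: "P s t i = s" for s t using ij by (simp add: P_def)
  have Pvj: "P s t j = t" for s t by (simp add: P_def)
  have DI: "((\<lambda>s'. G (P s' t)) has_real_derivative pd i G (P s t)) (at s)"
    if "lineC n r G" "\<bar>s - x i\<bar> < \<delta>" "\<bar>t - x j\<bar> < \<delta>" for G s t
    using lineC_deriv[OF that(1) PB[OF that(2,3)] i] by (simp add: Pi Pvi)
  have DJ: "((\<lambda>t'. G (P s t')) has_real_derivative pd j G (P s t)) (at t)"
    if "lineC n r G" "\<bar>s - x i\<bar> < \<delta>" "\<bar>t - x j\<bar> < \<delta>" for G s t
    using lineC_deriv[OF that(1) PB[OF that(2,3)] j] by (simp add: Pj Pvj)
  define V where "V = {x i - \<delta><..<x i + \<delta>} \<times> {x j - \<delta><..<x j + \<delta>}"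
  have oV: "open V" by (simp add: V_def open_Times)
  have inV: "(x i, x j) \<in> V" using \<delta> by (simp add: V_def)
  have imgV: "(\<lambda>p. x(i := fst p, j := snd p)) ` V \<subseteq> B"
  proof
    fix y assume "y \<in> (\<lambda>p. x(i := fst p, j := snd p)) ` V"
    then obtain s t where "y = P s t" "\<bar>s - x i\<bar> < \<delta>" "\<bar>t - x j\<bar> < \<delta>"
      by (auto simp: V_def P_def abs_less_iff)
    then show "y \<in> B" using PB by simp
  qed
  have CC: "continuous (at (x i, x j)) (\<lambda>p. G (P (fst p) (snd p)))" if "lineC n r G" for G
  proof -
    have cG: "continuous_on B G" using that by (simp add: lineC_def)
    have "continuous_on V (\<lambda>p. G (x(i := fst p, j := snd p)))"
      by (rule continuous_on_compose2[OF cG cont_upd2 imgV])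
    then have "continuous (at (x i, x j)) (\<lambda>p. G (x(i := fst p, j := snd p)))"
      by (rule continuous_on_interior) (simp add: interior_open[OF oV] inV)
    then show ?thesis by (simp add: P_def)
  qed
  have "pd j (pd i F) (P (x i) (x j)) = pd i (pd j F) (P (x i) (x j))"
  proof (rule clairaut2[of \<delta> "x i" "x j" "\<lambda>s t. F (P s t)" "\<lambda>s t. pd i F (P s t)" "\<lambda>s t. pd j F (P s t)"
       "\<lambda>s t. pd j (pd i F) (P s t)" "\<lambda>s t. pd i (pd j F) (P s t)", OF \<delta>])
    fix s t assume st: "\<bar>s - x i\<bar> < \<delta>" "\<bar>t - x j\<bar> < \<delta>"
    show "((\<lambda>s. F (P s t)) has_real_derivative pd i F (P s t)) (at s)" by (rule DI[OF lF st])
    show "((\<lambda>t. F (P s t)) has_real_derivative pd j F (P s t)) (at t)" by (rule DJ[OF lF st])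
    show "((\<lambda>t. pd i F (P s t)) has_real_derivative pd j (pd i F) (P s t)) (at t)" by (rule DJ[OF lFi st])
    show "((\<lambda>s. pd j F (P s t)) has_real_derivative pd i (pd j F) (P s t)) (at s)" by (rule DI[OF lFj st])
  next
    show "continuous (at (x i, x j)) (\<lambda>p. pd j (pd i F) (P (fst p) (snd p)))" by (rule CC[OF lFij])
    show "continuous (at (x i, x j)) (\<lambda>p. pd i (pd j F) (P (fst p) (snd p)))" by (rule CC[OF lFji])
  qed
  moreover have "P (x i) (x j) = x" by (simp add: P_def)
  ultimately show ?thesis by simp
qed

end

definition qf :: "nat \<Rightarrow> (nat \<Rightarrow> nat \<Rightarrow> real) \<Rightarrow> (nat \<Rightarrow> real) \<Rightarrow> real" where
  "qf d A v = (\<Sum>i<d. \<Sum>j<d. v i * A i j * v j)"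

definition nrm :: "nat \<Rightarrow> (nat \<Rightarrow> real) \<Rightarrow> real" where
  "nrm d v = (\<Sum>i<d. (v i)\<^sup>2)"

lemma nrm_nonneg: "nrm d v \<ge> 0"
  unfolding nrm_def by (intro sum_nonneg) auto

lemma nrm_zero: "nrm d v = 0 \<Longrightarrow> i < d \<Longrightarrow> v i = 0"
  unfolding nrm_def by (subst (asm) sum_nonneg_eq_0_iff) auto

lemma qf_zero: "(\<And>i. i < d \<Longrightarrow> v i = 0) \<Longrightarrow> qf d A v = 0"
  unfolding qf_def by simp

lemma qf_scale: "qf d A (\<lambda>i. s * v i) = s\<^sup>2 * qf d A v"
  unfolding qf_def power2_eq_square by (simp add: sum_distrib_left algebra_simps)

lemma nrm_scale: "nrm d (\<lambda>i. s * v i) = s\<^sup>2 * nrm d v"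
  unfolding nrm_def by (simp add: sum_distrib_left power_mult_distrib)

lemma finite_eigenvalues: "finite (eigenvalues d A)"
proof -
  define M where "M = mat d d (\<lambda>(i, j). A i j)"
  have M: "M \<in> carrier_mat d d" by (simp add: M_def)
  have "eigenvalues d A \<subseteq> {k. poly (char_poly M) k = 0}"
  proof
    fix l assume "l \<in> eigenvalues d A"
    then obtain v where v: "\<exists>i<d. v i \<noteq> 0" "\<forall>i<d. (\<Sum>j<d. A i j * v j) = l * v i"
      unfolding eigenvalues_def by blast
    define w where "w = vec d v"
    have "eigenvector M w l"
      unfolding eigenvector_def
    proof (intro conjI)
      show "w \<in> carrier_vec (dim_row M)" by (simp add: w_def M_def)
      show "w \<noteq> 0\<^sub>v (dim_row M)"
      proof
        assume "w = 0\<^sub>v (dim_row M)"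
        then have "\<forall>i<d. v i = 0" by (metis M_def dim_row_mat(1) index_vec index_zero_vec(1) w_def)
        then show False using v(1) by blast
      qed
      show "M *\<^sub>v w = l \<cdot>\<^sub>v w"
      proof (rule eq_vecI)
        show "dim_vec (M *\<^sub>v w) = dim_vec (l \<cdot>\<^sub>v w)" by (simp add: M_def w_def)
        fix i assume "i < dim_vec (l \<cdot>\<^sub>v w)"
        then have i: "i < d" by (simp add: w_def)
        have "(M *\<^sub>v w) $ i = (\<Sum>j\<in>{0..<d}. A i j * v j)"
          using i by (simp add: M_def w_def scalar_prod_def)
        also have "\<dots> = l * v i" using v(2) i by (simp add: atLeast0LessThan)
        finally show "(M *\<^sub>v w) $ i = (l \<cdot>\<^sub>v w) $ i" using i by (simp add: w_def)
      qed
    qed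
    then have "eigenvalue M l" unfolding eigenvalue_def by blast
    then show "l \<in> {k. poly (char_poly M) k = 0}" using eigenvalue_root_char_poly[OF M] by simp
  qed
  moreover have "char_poly M \<noteq> 0" using degree_monic_char_poly[OF M] by auto
  ultimately show ?thesis using poly_roots_finite finite_subset by blast
qed


lemma qf_cong: "(\<And>i. i < d \<Longrightarrow> v i = w i) \<Longrightarrow> qf d A v = qf d A w"
  unfolding qf_def by simp

lemma nrm_cong: "(\<And>i. i < d \<Longrightarrow> v i = w i) \<Longrightarrow> nrm d v = nrm d w"
  unfolding nrm_def by simp

lemma quad_lin: fixes \<beta> \<gamma> :: real assumes "\<And>t. 0 \<le> 2 * t * \<beta> + t\<^sup>2 * \<gamma>" shows "\<beta> = 0"
proof (rule ccontr)
  assume b: "\<beta> \<noteq> 0"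
  define k where "k = \<bar>\<gamma>\<bar> + 1"
  have k: "k > 0" by (simp add: k_def)
  have gk: "\<gamma> / k < 1" using k by (simp add: divide_less_eq k_def)
  define t where "t = - \<beta> / k"
  have eq: "2 * t * \<beta> + t\<^sup>2 * \<gamma> = - ((\<beta>\<^sup>2 / k) * (2 - \<gamma> / k))"
    using k by (simp add: t_def field_simps power2_eq_square)
  have p1: "\<beta>\<^sup>2 / k > 0" using b k by simp
  have p2: "2 - \<gamma> / k > 0" using gk by simp
  have "(\<beta>\<^sup>2 / k) * (2 - \<gamma> / k) > 0" by (rule mult_pos_pos[OF p1 p2])
  then have "2 * t * \<beta> + t\<^sup>2 * \<gamma> < 0" unfolding eq by linarith
  with assms[of t] show False by simp
qed

lemma compact_K: "compact (PiE UNIV (\<lambda>i. if i < d then {-1..1} else {0::real}))"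
proof -
  have "compactin (product_topology (\<lambda>i. euclidean) UNIV) (PiE UNIV (\<lambda>i. if i < d then {-1..1} else {0::real}))"
    by (subst compactin_PiE) auto
  then show ?thesis by (simp add: euclidean_product_topology)
qed

lemma cont_nrm: "continuous_on S (nrm d)"
  unfolding nrm_def
  by (intro continuous_intros continuous_on_subset[OF continuous_on_product_coordinates]) auto

lemma cont_qf: "continuous_on S (qf d A)"
  unfolding qf_def
  by (intro continuous_intros continuous_on_subset[OF continuous_on_product_coordinates]) auto

lemma sum_e1: "(i::nat) < d \<Longrightarrow> (\<Sum>b<d. (f b :: real) * (if b = i then 1 else 0)) = f i"
proof -
  assume i: "i < d"
  have "(\<Sum>b<d. f b * (if b = i then 1 else 0)) = (\<Sum>b<d. if b = i then f b else 0)"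
    by (intro sum.cong) auto
  then show ?thesis using i by (simp add: sum.delta)
qed

lemma sum_e2: "(i::nat) < d \<Longrightarrow> (\<Sum>b<d. (if b = i then 1 else 0) * (f b :: real)) = f i"
  using sum_e1[of i d f] by (simp add: mult.commute)

lemma qf_expand:
  assumes sym: "\<forall>i<d. \<forall>j<d. A i j = A j i" and i: "i < d"
  shows "qf d A (\<lambda>k. v k + t * (if k = i then 1 else 0)) = qf d A v + 2 * t * (\<Sum>j<d. A i j * v j) + t\<^sup>2 * A i i"
proof -
  define e :: "nat \<Rightarrow> real" where "e = (\<lambda>k. if k = i then 1 else 0)"
  have "qf d A (\<lambda>k. v k + t * e k) = qf d A v + t * (\<Sum>a<d. \<Sum>b<d. e a * A a b * v b)
      + t * (\<Sum>a<d. \<Sum>b<d. v a * A a b * e b) + t\<^sup>2 * (\<Sum>a<d. \<Sum>b<d. e a * A a b * e b)"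
    unfolding qf_def by (simp add: algebra_simps sum.distrib sum_distrib_left power2_eq_square)
  moreover have "(\<Sum>a<d. \<Sum>b<d. e a * A a b * v b) = (\<Sum>j<d. A i j * v j)"
  proof -
    have "(\<Sum>a<d. \<Sum>b<d. e a * A a b * v b) = (\<Sum>a<d. e a * (\<Sum>b<d. A a b * v b))"
      by (simp add: sum_distrib_left mult.assoc)
    also have "\<dots> = (\<Sum>b<d. A i b * v b)" unfolding e_def by (rule sum_e2[OF i])
    finally show ?thesis .
  qed
  moreover have "(\<Sum>a<d. \<Sum>b<d. v a * A a b * e b) = (\<Sum>j<d. A i j * v j)"
  proof -
    have "(\<Sum>a<d. \<Sum>b<d. v a * A a b * e b) = (\<Sum>a<d. v a * A a i)"
      unfolding e_def by (intro sum.cong refl) (rule sum_e1[OF i])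
    also have "\<dots> = (\<Sum>j<d. A i j * v j)" using sym i by (intro sum.cong) auto
    finally show ?thesis .
  qed
  moreover have "(\<Sum>a<d. \<Sum>b<d. e a * A a b * e b) = A i i"
  proof -
    have "(\<Sum>a<d. \<Sum>b<d. e a * A a b * e b) = (\<Sum>a<d. e a * (\<Sum>b<d. A a b * e b))"
      by (simp add: sum_distrib_left mult.assoc)
    also have "\<dots> = (\<Sum>b<d. A i b * e b)" unfolding e_def by (rule sum_e2[OF i])
    also have "\<dots> = A i i" unfolding e_def by (rule sum_e1[OF i])
    finally show ?thesis .
  qed
  ultimately show ?thesis by (simp add: e_def)
qed

lemma nrm_expand:
  assumes i: "i < d"
  shows "nrm d (\<lambda>k. v k + t * (if k = i then 1 else 0)) = nrm d v + 2 * t * v i + t\<^sup>2"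
proof -
  have "nrm d (\<lambda>k. v k + t * (if k = i then 1 else 0)) = (\<Sum>k<d. (v k)\<^sup>2 + (if k = i then 2 * t * v k + t\<^sup>2 else 0))"
    unfolding nrm_def by (intro sum.cong) (auto simp: power2_eq_square algebra_simps)
  also have "\<dots> = nrm d v + (2 * t * v i + t\<^sup>2)"
    using i by (simp add: sum.distrib nrm_def sum.delta)
  finally show ?thesis by simp
qed

lemma rayleigh:
  assumes d: "0 < d" and sym: "\<forall>i<d. \<forall>j<d. A i j = A j i"
  obtains c v where "nrm d v = 1" "\<forall>i<d. (\<Sum>j<d. A i j * v j) = c * v i" "\<forall>x. c * nrm d x \<le> qf d A x"
proof -
  define P where "P = PiE UNIV (\<lambda>i. if i < d then {-1..1} else {0::real})"
  define K where "K = P \<inter> {v. nrm d v = 1}"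
  have cK: "compact K" unfolding K_def P_def
    by (rule compact_Int_closed[OF compact_K closed_Collect_eq[OF cont_nrm continuous_on_const]])
  define e0 :: "nat \<Rightarrow> real" where "e0 = (\<lambda>i. if i = 0 then 1 else 0)"
  have "nrm d e0 = (\<Sum>i<d. if i = 0 then 1 else 0)" unfolding nrm_def by (intro sum.cong) (auto simp: e0_def)
  also have "\<dots> = (1::real)" using d by simp
  finally have "nrm d e0 = 1" .
  moreover have "e0 \<in> P" using d by (auto simp: P_def e0_def)
  ultimately have "e0 \<in> K" by (simp add: K_def)
  then have ne: "K \<noteq> {}" by blast
  obtain v where v: "v \<in> K" and vmin: "\<And>y. y \<in> K \<Longrightarrow> qf d A v \<le> qf d A y"
    using continuous_attains_inf[OF cK ne cont_qf] by blast
  define c where "c = qf d A v"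
  have nv: "nrm d v = 1" using v by (simp add: K_def)
  have bound: "c * nrm d x \<le> qf d A x" for x
  proof (cases "nrm d x = 0")
    case True
    then have "qf d A x = 0" using nrm_zero qf_zero by blast
    then show ?thesis using True by simp
  next
    case False
    then have pos: "nrm d x > 0" using nrm_nonneg[of d x] by simp
    define s where "s = sqrt (nrm d x)"
    have s: "s > 0" "s\<^sup>2 = nrm d x" using pos by (auto simp: s_def)
    define y where "y = (\<lambda>i. if i < d then (1 / s) * x i else 0)"
    have ny: "nrm d y = 1"
    proof -
      have "nrm d y = nrm d (\<lambda>i. (1 / s) * x i)" by (rule nrm_cong) (simp add: y_def)
      also have "\<dots> = (1 / s)\<^sup>2 * nrm d x" by (rule nrm_scale)
      also have "\<dots> = 1" using s pos by (simp add: power_divide)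
      finally show ?thesis .
    qed
    have "y \<in> P"
    proof -
      have "\<bar>y i\<bar> \<le> 1" if "i < d" for i
      proof -
        have "(y i)\<^sup>2 \<le> nrm d y" unfolding nrm_def
          by (rule member_le_sum) (use that in auto)
        then show ?thesis using ny abs_square_le_1 by auto
      qed
      then have "y i \<in> (if i < d then {-1..1} else {0})" for i
      proof (cases "i < d")
        case True
        then have "\<bar>y i\<bar> \<le> 1" using \<open>\<And>i. i < d \<Longrightarrow> \<bar>y i\<bar> \<le> 1\<close> by blast
        then show ?thesis using True by (simp add: abs_le_iff)
      next
        case False then show ?thesis by (simp add: y_def)
      qed
      then show ?thesis by (auto simp: P_def)
    qed
    then have "y \<in> K" using ny by (simp add: K_def)
    then have "c \<le> qf d A y" using vmin by (simp add: c_def)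
    also have "qf d A y = qf d A (\<lambda>i. (1 / s) * x i)" by (rule qf_cong) (simp add: y_def)
    also have "\<dots> = (1 / s)\<^sup>2 * qf d A x" by (rule qf_scale)
    also have "\<dots> = qf d A x / nrm d x" using s pos by (simp add: power_divide)
    finally show ?thesis using pos by (simp add: divide_simps mult.commute)
  qed
  have eig: "(\<Sum>j<d. A i j * v j) = c * v i" if i: "i < d" for i
  proof -
    have "(\<Sum>j<d. A i j * v j) - c * v i = 0"
    proof (rule quad_lin)
      fix t
      have "c * nrm d (\<lambda>k. v k + t * (if k = i then 1 else 0)) \<le> qf d A (\<lambda>k. v k + t * (if k = i then 1 else 0))"
        by (rule bound)
      then have "c * (1 + 2 * t * v i + t\<^sup>2) \<le> c + 2 * t * (\<Sum>j<d. A i j * v j) + t\<^sup>2 * A i i"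
        using qf_expand[OF sym i] nrm_expand[OF i] nv by (simp add: c_def)
      then show "0 \<le> 2 * t * ((\<Sum>j<d. A i j * v j) - c * v i) + t\<^sup>2 * (A i i - c)"
        by (simp add: algebra_simps)
    qed
    then show ?thesis by simp
  qed
  show ?thesis by (rule that[OF nv]) (use eig bound in auto)
qed

lemma lambda_min_bound:
  assumes d: "0 < d" and sym: "\<forall>i<d. \<forall>j<d. A i j = A j i"
  shows "\<forall>x. lambda_min d A * nrm d x \<le> qf d A x"
    and "posdef d A \<Longrightarrow> lambda_min d A > 0"
proof -
  obtain c v where nv: "nrm d v = 1" and ev: "\<forall>i<d. (\<Sum>j<d. A i j * v j) = c * v i"
    and b: "\<forall>x. c * nrm d x \<le> qf d A x"
    by (rule rayleigh[OF d sym])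
  have qf_eig: "qf d A z = l * nrm d z" if "\<forall>i<d. (\<Sum>j<d. A i j * z j) = l * z i" for z l
  proof -
    have "qf d A z = (\<Sum>i<d. z i * (\<Sum>j<d. A i j * z j))"
      unfolding qf_def by (intro sum.cong) (auto simp: sum_distrib_left algebra_simps)
    also have "\<dots> = (\<Sum>i<d. l * (z i)\<^sup>2)" using that by (intro sum.cong) (auto simp: power2_eq_square)
    finally show ?thesis by (simp add: nrm_def sum_distrib_left)
  qed
  have vnz: "\<exists>i<d. v i \<noteq> 0"
  proof (rule ccontr)
    assume "\<not> (\<exists>i<d. v i \<noteq> 0)"
    then have "nrm d v = 0" by (simp add: nrm_def)
    then show False using nv by simp
  qed
  have cE: "c \<in> eigenvalues d A" unfolding eigenvalues_def using vnz ev by blast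
  have le: "c \<le> l" if lE: "l \<in> eigenvalues d A" for l
  proof -
    obtain z where z: "\<exists>i<d. z i \<noteq> 0" "\<forall>i<d. (\<Sum>j<d. A i j * z j) = l * z i"
      using lE unfolding eigenvalues_def by blast
    have "nrm d z \<noteq> 0" using z(1) nrm_zero by blast
    then have pz: "nrm d z > 0" using nrm_nonneg[of d z] by simp
    have "c * nrm d z \<le> l * nrm d z" using b qf_eig[OF z(2)] by metis
    then show ?thesis using pz by simp
  qed
  have lm: "lambda_min d A = c"
    unfolding lambda_min_def by (rule Min_eqI[OF finite_eigenvalues le cE])
  show "\<forall>x. lambda_min d A * nrm d x \<le> qf d A x" using b lm by simp
  assume pd: "posdef d A"
  have "qf d A v > 0" using pd vnz unfolding posdef_def qf_def by blast
  then show "lambda_min d A > 0" using qf_eig[OF ev] nv lm by simp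
qed

lemma oint_cong: "(\<And>t. t \<in> {min 0 a..max 0 a} \<Longrightarrow> f t = g t) \<Longrightarrow> oint 0 a f = oint 0 a g"
  unfolding oint_def by (cases "0 \<le> a") (auto intro!: integral_cong)

lemma telesum: "(\<nu>::nat) < N \<Longrightarrow>
  (\<Sum>\<mu><N. if \<mu> < \<nu> then A \<mu> - A (Suc \<mu>) else if \<mu> = \<nu> then A \<nu> else (0::real)) = A 0"
proof (induction N)
  case 0 then show ?case by simp
next
  case (Suc N)
  show ?case
  proof (cases "\<nu> < N")
    case True
    then show ?thesis using Suc by simp
  next
    case False
    then have nu: "\<nu> = N" using Suc.prems by simp
    have "(\<Sum>\<mu><N. if \<mu> < \<nu> then A \<mu> - A (Suc \<mu>) else if \<mu> = \<nu> then A \<nu> else 0) = (\<Sum>\<mu><N. A \<mu> - A (Suc \<mu>))"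
      using nu by (intro sum.cong) auto
    also have "\<dots> = A 0 - A N" by (rule sum_lessThan_telescope')
    finally show ?thesis using nu by simp
  qed
qed

lemma sum_split_nat: "(\<Sum>i<(N::nat) + m. f i) = (\<Sum>i<N. f i) + (\<Sum>a<m. f (N + a) :: real)"
  by (induction m arbitrary: f) (auto simp: algebra_simps)

lemma Zm_0: "Zm 0 x = x"
  unfolding Zm_def by simp

lemma Zm_Suc: "Zm \<mu> (x(\<mu> := 0)) = Zm (Suc \<mu>) x"
  unfolding Zm_def by (rule ext) auto

lemma Zm_self: "Zm \<mu> (x(\<mu> := x \<mu>)) = Zm \<mu> x"
  by simp

definition Qf :: "nat \<Rightarrow> nat \<Rightarrow> real \<Rightarrow> pt \<Rightarrow> real" where
  "Qf n m w x = w / 2 * (\<Sum>a<m. (x (n - m + a))\<^sup>2)"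

lemma hhat_eq: "hhat n m u w = (\<lambda>x. (\<Sum>\<mu><n-m. Ig \<mu> (\<lambda>y. u \<mu> (Zm \<mu> y)) x) + Qf n m w x)"
proof (rule ext)
  fix x
  have "(\<lambda>t. u \<mu> (\<lambda>i. if i < \<mu> then 0 else if i = \<mu> then t else x i)) = (\<lambda>t. u \<mu> (Zm \<mu> (x(\<mu> := t))))" for \<mu>
    by (rule ext) (simp add: Zm_def fun_upd_def)
  then show "hhat n m u w x = (\<Sum>\<mu><n-m. Ig \<mu> (\<lambda>y. u \<mu> (Zm \<mu> y)) x) + Qf n m w x"
    unfolding hhat_def Ig_def Qf_def by simp
qed

lemma hhat_zero_low: "(\<And>\<mu>. \<mu> < n - m \<Longrightarrow> x \<mu> = 0) \<Longrightarrow> hhat n m u w x = Qf n m w x"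
  unfolding hhat_def Qf_def oint_def by simp

lemma Qf_deriv:
  assumes j: "n - m \<le> j" "j < n" and mn: "m \<le> n"
  shows "((\<lambda>t. Qf n m w (x(j := t))) has_real_derivative w * t0) (at t0)"
proof -
  define b where "b = j - (n - m)"
  have b: "b < m" "j = n - m + b" using j mn by (auto simp: b_def)
  define C where "C = (\<Sum>a<m. (x (n - m + a))\<^sup>2)"
  have e: "Qf n m w (x(j := t)) = w / 2 * ((t\<^sup>2 - (x j)\<^sup>2) + C)" for t
  proof -
    have "(\<Sum>a<m. ((x(j := t)) (n - m + a))\<^sup>2) = (\<Sum>a<m. (if a = b then t\<^sup>2 - (x j)\<^sup>2 else 0) + (x (n - m + a))\<^sup>2)"
      using b by (intro sum.cong) auto
    also have "\<dots> = (t\<^sup>2 - (x j)\<^sup>2) + C" using b by (simp add: sum.distrib C_def)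
    finally show ?thesis by (simp add: Qf_def)
  qed
  have "((\<lambda>t. w / 2 * ((t\<^sup>2 - (x j)\<^sup>2) + C)) has_real_derivative w / 2 * ((2 * t0 - 0) + 0)) (at t0)"
    by (intro DERIV_cmult DERIV_add DERIV_diff DERIV_const) (auto intro!: derivative_eq_intros)
  then show ?thesis unfolding e by simp
qed

context bx begin

lemma smooth_const: "smooth_on n B (\<lambda>x. c)"
  unfolding smooth_Dk by (simp add: Dk_const)

lemma smooth_add: "smooth_on n B f \<Longrightarrow> smooth_on n B g \<Longrightarrow> smooth_on n B (\<lambda>x. f x + g x)"
  unfolding smooth_Dk by (simp add: Dk_add)

lemma smooth_mult: "smooth_on n B f \<Longrightarrow> smooth_on n B g \<Longrightarrow> smooth_on n B (\<lambda>x. f x * g x)"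
  unfolding smooth_Dk by (simp add: Dk_mult)

lemma smooth_sum: "finite A \<Longrightarrow> (\<And>a. a \<in> A \<Longrightarrow> smooth_on n B (F a)) \<Longrightarrow> smooth_on n B (\<lambda>x. \<Sum>a\<in>A. F a x)"
  unfolding smooth_Dk by (simp add: Dk_sum)

lemma smooth_coord: "smooth_on n B (\<lambda>x. x j)"
  unfolding smooth_Dk by (simp add: Dk_coord)

lemma smooth_comp: "smooth_on n B u \<Longrightarrow> smooth_on n B (\<lambda>x. u (Zm \<mu> x))"
  unfolding smooth_Dk by (simp add: Dk_comp)

lemma smooth_pd: "smooth_on n B f \<Longrightarrow> i < n \<Longrightarrow> smooth_on n B (pd i f)"
  unfolding smooth_Dk using Dk_Suc by blast

lemma smooth_lineC: "smooth_on n B f \<Longrightarrow> lineC n r f"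
  unfolding smooth_Dk using Dk_0 by blast

lemma smooth_cont: "smooth_on n B f \<Longrightarrow> continuous_on B f"
  using smooth_lineC lineC_def by blast

lemma smooth_Dk2: "smooth_on n B f \<Longrightarrow> Dk n r 2 f"
  unfolding smooth_Dk by blast

lemma smooth_Qf: "smooth_on n B (Qf n m w)"
proof -
  have "smooth_on n B (\<lambda>x. w / 2 * (\<Sum>a<m. x (n - m + a) * x (n - m + a)))"
    by (intro smooth_mult smooth_const smooth_sum smooth_coord) auto
  then show ?thesis unfolding Qf_def by (simp add: power2_eq_square)
qed

lemma smooth_hhat:
  assumes u: "\<And>\<mu>. \<mu> < n - m \<Longrightarrow> smooth_on n B (u \<mu>)"
  shows "smooth_on n B (hhat n m u w)"
  unfolding hhat_eq
  by (intro smooth_add smooth_sum smooth_Ig smooth_comp u smooth_Qf) auto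

lemma pd_hhat:
  assumes mn: "m < n" and u: "\<And>\<mu>. \<mu> < n - m \<Longrightarrow> smooth_on n B (u \<mu>)"
    and sym: "\<forall>\<mu><n-m. \<forall>\<nu><n-m. \<forall>x\<in>B. pd \<mu> (u \<nu>) x = pd \<nu> (u \<mu>) x"
    and nu: "\<nu> < n - m" and x: "x \<in> B"
  shows "pd \<nu> (hhat n m u w) x = u \<nu> x"
proof -
  define N where "N = n - m"
  have Nn: "N \<le> n" by (simp add: N_def)
  define G where "G = (\<lambda>\<mu> y. u \<mu> (Zm \<mu> y))"
  define T where "T = (\<lambda>\<mu>. Ig \<mu> (G \<mu>))"
  have sG: "smooth_on n B (G \<mu>)" if "\<mu> < N" for \<mu>
    unfolding G_def by (rule smooth_comp[OF u]) (use that in \<open>simp add: N_def\<close>)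
  have sT: "smooth_on n B (T \<mu>)" if "\<mu> < N" for \<mu>
    unfolding T_def by (rule smooth_Ig[OF sG[OF that]]) (use that Nn in auto)
  have lQ: "lineC n r (Qf n m w)" by (rule smooth_lineC[OF smooth_Qf])
  have lS: "lineC n r (\<lambda>x. \<Sum>\<mu><N. T \<mu> x)"
    by (rule lineC_sum) (auto intro: smooth_lineC sT)
  have nun: "\<nu> < n" using nu mn by simp
  have hh: "hhat n m u w = (\<lambda>x. (\<Sum>\<mu><N. T \<mu> x) + Qf n m w x)"
    unfolding hhat_eq T_def G_def N_def by simp
  have "pd \<nu> (hhat n m u w) x = pd \<nu> (\<lambda>x. \<Sum>\<mu><N. T \<mu> x) x + pd \<nu> (Qf n m w) x"
    unfolding hh by (rule pd_add[OF lS lQ x nun])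
  also have "pd \<nu> (\<lambda>x. \<Sum>\<mu><N. T \<mu> x) x = (\<Sum>\<mu><N. pd \<nu> (T \<mu>) x)"
    by (rule pd_sum) (auto intro: smooth_lineC sT x nun)
  also have "pd \<nu> (Qf n m w) x = 0"
  proof -
    have "(\<lambda>t. Qf n m w (x(\<nu> := t))) = (\<lambda>t. Qf n m w x)"
    proof (rule ext)
      fix t
      have "(\<Sum>a<m. ((x(\<nu> := t)) (n - m + a))\<^sup>2) = (\<Sum>a<m. (x (n - m + a))\<^sup>2)"
        using nu by (intro sum.cong) auto
      then show "Qf n m w (x(\<nu> := t)) = Qf n m w x" by (simp add: Qf_def)
    qed
    then show ?thesis unfolding pd_def by simp
  qed
  also have "(\<Sum>\<mu><N. pd \<nu> (T \<mu>) x) =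
     (\<Sum>\<mu><N. if \<mu> < \<nu> then u \<nu> (Zm \<mu> x) - u \<nu> (Zm (Suc \<mu>) x) else if \<mu> = \<nu> then u \<nu> (Zm \<nu> x) else 0)"
  proof (rule sum.cong[OF refl])
    fix \<mu> assume "\<mu> \<in> {..<N}"
    then have mu: "\<mu> < N" by simp
    have mun: "\<mu> < n" using mu Nn by simp
    have lG: "lineC n r (G \<mu>)" by (rule smooth_lineC[OF sG[OF mu]])
    show "pd \<nu> (T \<mu>) x = (if \<mu> < \<nu> then u \<nu> (Zm \<mu> x) - u \<nu> (Zm (Suc \<mu>) x) else if \<mu> = \<nu> then u \<nu> (Zm \<nu> x) else 0)"
    proof (cases "\<mu> = \<nu>")
      case True
      have "pd \<mu> (T \<mu>) x = G \<mu> x"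
        unfolding T_def by (rule pd_Ig_mu[OF smooth_cont[OF sG[OF mu]] mun x])
      then show ?thesis using True by (simp add: G_def)
    next
      case False
      have cGn: "continuous_on B (pd \<nu> (G \<mu>))" by (rule smooth_cont[OF smooth_pd[OF sG[OF mu] nun]])
      have "pd \<nu> (T \<mu>) x = Ig \<mu> (pd \<nu> (G \<mu>)) x"
        unfolding T_def by (rule pd_Ig_j[OF lG cGn nun mun]) (use False x in auto)
      also have "pd \<nu> (G \<mu>) = (\<lambda>y. if \<nu> < \<mu> then 0 else pd \<nu> (u \<mu>) (Zm \<mu> y))"
        unfolding G_def by (rule ext) (rule pd_comp)
      finally have e: "pd \<nu> (T \<mu>) x = Ig \<mu> (\<lambda>y. if \<nu> < \<mu> then 0 else pd \<nu> (u \<mu>) (Zm \<mu> y)) x" .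
      show ?thesis
      proof (cases "\<nu> < \<mu>")
        case True
        then show ?thesis using e False by (simp add: Ig_zero)
      next
        case nl: False
        then have ml: "\<mu> < \<nu>" using False by simp
        have "pd \<nu> (T \<mu>) x = oint 0 (x \<mu>) (\<lambda>t. pd \<nu> (u \<mu>) (Zm \<mu> (x(\<mu> := t))))"
          using e nl by (simp add: Ig_def)
        also have "\<dots> = oint 0 (x \<mu>) (\<lambda>t. pd \<mu> (u \<nu>) (Zm \<mu> (x(\<mu> := t))))"
        proof (rule oint_cong)
          fix t assume t: "t \<in> {min 0 (x \<mu>)..max 0 (x \<mu>)}"
          have "Zm \<mu> (x(\<mu> := t)) \<in> B"
            using seg_in[OF x mun t] box_upd[OF x mun] Zm_box by blast
          then show "pd \<nu> (u \<mu>) (Zm \<mu> (x(\<mu> := t))) = pd \<mu> (u \<nu>) (Zm \<mu> (x(\<mu> := t)))"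
            using sym mu nu by (simp add: N_def)
        qed
        also have "\<dots> = u \<nu> (Zm \<mu> (x(\<mu> := x \<mu>))) - u \<nu> (Zm \<mu> (x(\<mu> := 0)))"
        proof (rule oint_ftc[where f = "\<lambda>t. u \<nu> (Zm \<mu> (x(\<mu> := t)))"])
          fix t assume t: "t \<in> {min 0 (x \<mu>)..max 0 (x \<mu>)}"
          define y where "y = Zm \<mu> (x(\<mu> := t))"
          have yB: "y \<in> B" unfolding y_def
            using seg_in[OF x mun t] box_upd[OF x mun] Zm_box by blast
          have lu: "lineC n r (u \<nu>)" by (rule smooth_lineC[OF u[OF nu]])
          have D: "((\<lambda>s. u \<nu> (y(\<mu> := s))) has_real_derivative pd \<mu> (u \<nu>) y) (at (y \<mu>))"
            by (rule lineC_deriv[OF lu yB mun])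
          have e1: "y(\<mu> := s) = Zm \<mu> (x(\<mu> := s))" for s
            unfolding y_def by (simp add: Zm_upd)
          have e2: "y \<mu> = t" unfolding y_def by (simp add: Zm_upd)
          show "((\<lambda>t. u \<nu> (Zm \<mu> (x(\<mu> := t)))) has_real_derivative pd \<mu> (u \<nu>) (Zm \<mu> (x(\<mu> := t)))) (at t)"
          proof -
            have "((\<lambda>s. u \<nu> (Zm \<mu> (x(\<mu> := s)))) has_real_derivative pd \<mu> (u \<nu>) y) (at t)"
              using D unfolding e1 e2 .
            then show ?thesis by (simp only: y_def)
          qed
        qed
        also have "\<dots> = u \<nu> (Zm \<mu> x) - u \<nu> (Zm (Suc \<mu>) x)" by (simp add: Zm_Suc)
        finally show ?thesis using ml by simp
      qed
    qed
  qed
  also have "\<dots> = u \<nu> (Zm 0 x)" by (rule telesum) (use nu in \<open>simp add: N_def\<close>)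
  finally show ?thesis by (simp add: Zm_0)
qed

lemma pd_hhat_high:
  assumes mn: "m < n" and j: "n - m \<le> j" "j < n" and y: "\<And>\<mu>. \<mu> < n - m \<Longrightarrow> y \<mu> = 0"
  shows "pd j (hhat n m u w) y = w * y j"
proof -
  have e: "(\<lambda>t. hhat n m u w (y(j := t))) = (\<lambda>t. Qf n m w (y(j := t)))"
    by (rule ext, rule hhat_zero_low) (use y j in auto)
  show ?thesis unfolding pd_def e
    by (rule DERIV_imp_deriv, rule Qf_deriv) (use j mn in auto)
qed

lemma hess_high:
  assumes mn: "m < n" and i: "n - m \<le> i" "i < n" and j: "n - m \<le> j" "j < n"
  shows "pd i (pd j (hhat n m u w)) (\<lambda>_. 0) = (if i = j then w else 0)"
proof -
  have e: "(\<lambda>s. pd j (hhat n m u w) ((\<lambda>_. 0)(i := s))) = (\<lambda>s. w * (if i = j then s else 0))"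
  proof (rule ext)
    fix s
    have "pd j (hhat n m u w) ((\<lambda>_. 0)(i := s)) = w * ((\<lambda>_. 0)(i := s)) j"
      by (rule pd_hhat_high[OF mn j]) (use i in auto)
    then show "pd j (hhat n m u w) ((\<lambda>_. 0)(i := s)) = w * (if i = j then s else 0)" by auto
  qed
  have pe: "pd i (pd j (hhat n m u w)) (\<lambda>_. 0) = deriv (\<lambda>s. w * (if i = j then s else 0)) 0"
    unfolding pd_def[of i "pd j (hhat n m u w)"] e by simp
  show ?thesis
  proof (cases "i = j")
    case True
    have "((\<lambda>s. w * (if i = j then s else 0)) has_real_derivative w * 1) (at 0)"
      using True by (auto intro!: derivative_eq_intros)
    then show ?thesis using True pe by (simp add: DERIV_imp_deriv)
  next
    case False
    then show ?thesis using pe by simp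
  qed
qed

end

lemma sum_cart: "(\<Sum>p\<in>A \<times> V. f (fst p) (snd p)) = (\<Sum>a\<in>A. \<Sum>\<nu>\<in>V. (f a \<nu> :: real))"
  by (subst sum.cartesian_product) (simp add: case_prod_beta)

lemma cs2:
  fixes y x :: "nat \<Rightarrow> real" and c :: "nat \<Rightarrow> nat \<Rightarrow> real"
  shows "(\<Sum>a\<in>A. \<Sum>\<nu>\<in>V. y a * c a \<nu> * x \<nu>)\<^sup>2 \<le> (\<Sum>\<nu>\<in>V. \<Sum>a\<in>A. (c a \<nu>)\<^sup>2) * (\<Sum>\<nu>\<in>V. (x \<nu>)\<^sup>2) * (\<Sum>a\<in>A. (y a)\<^sup>2)"
proof -
  have CS: "(\<Sum>p\<in>A \<times> V. c (fst p) (snd p) * (y (fst p) * x (snd p)))\<^sup>2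
      \<le> (\<Sum>p\<in>A \<times> V. (c (fst p) (snd p))\<^sup>2) * (\<Sum>p\<in>A \<times> V. (y (fst p) * x (snd p))\<^sup>2)"
    by (rule Cauchy_Schwarz_ineq_sum)
  have e1: "(\<Sum>p\<in>A \<times> V. c (fst p) (snd p) * (y (fst p) * x (snd p))) = (\<Sum>a\<in>A. \<Sum>\<nu>\<in>V. y a * c a \<nu> * x \<nu>)"
    by (subst sum_cart[where f = "\<lambda>a \<nu>. c a \<nu> * (y a * x \<nu>)"]) (simp add: algebra_simps)
  have e2: "(\<Sum>p\<in>A \<times> V. (c (fst p) (snd p))\<^sup>2) = (\<Sum>\<nu>\<in>V. \<Sum>a\<in>A. (c a \<nu>)\<^sup>2)"
    by (subst sum_cart[where f = "\<lambda>a \<nu>. (c a \<nu>)\<^sup>2"]) (rule sum.swap)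
  have e3: "(\<Sum>p\<in>A \<times> V. (y (fst p) * x (snd p))\<^sup>2) = (\<Sum>a\<in>A. (y a)\<^sup>2) * (\<Sum>\<nu>\<in>V. (x \<nu>)\<^sup>2)"
    by (subst sum_cart[where f = "\<lambda>a \<nu>. (y a * x \<nu>)\<^sup>2"]) (simp add: sum_product power_mult_distrib)
  show ?thesis using CS unfolding e1 e2 e3 by (simp add: ac_simps)
qed

lemma quad_pos:
  fixes l w S X Y T :: real
  assumes l: "l > 0" and wl: "w * l > S" and S: "S \<ge> 0" and X: "X \<ge> 0" and Y: "Y \<ge> 0"
    and XY: "X + Y > 0" and T: "T\<^sup>2 \<le> S * X * Y"
  shows "l * X + 2 * T + w * Y > 0"
proof -
  have "w * l > 0" using wl S by linarith
  then have w: "w > 0" using l by (simp add: zero_less_mult_iff)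
  show ?thesis
  proof (cases "X = 0 \<or> Y = 0")
    case True
    then have "T\<^sup>2 \<le> 0" using T by auto
    then have "T = 0" by simp
    then show ?thesis using True XY l w X Y by (auto simp: add_pos_pos)
  next
    case False
    then have XYp: "X * Y > 0" using X Y by simp
    have "S * (X * Y) < (w * l) * (X * Y)" by (rule mult_strict_right_mono[OF wl XYp])
    then have "S * X * Y < w * l * X * Y" by (simp add: mult.assoc)
    also have "\<dots> \<le> (l * X + w * Y)\<^sup>2 / 4"
    proof -
      have "0 \<le> (l * X - w * Y)\<^sup>2" by simp
      then show ?thesis by (simp add: power2_eq_square algebra_simps)
    qed
    finally have "(-2 * T)\<^sup>2 < (l * X + w * Y)\<^sup>2" using T by (simp add: power2_eq_square algebra_simps)
    moreover have "0 \<le> l * X + w * Y" using l w X Y by simp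
    ultimately have "-2 * T < l * X + w * Y" by (rule power2_less_imp_less)
    then show ?thesis by linarith
  qed
qed

theorem mainTheorem8:
  fixes n m :: nat and r :: "nat \<Rightarrow> real" and h :: "pt \<Rightarrow> real"
    and P K :: "nat \<Rightarrow> nat \<Rightarrow> pt \<Rightarrow> real"
  assumes "1 \<le> m" and "m < n"
    and "\<forall>i<n. 0 < r i"
    and "smooth_on n (box_n n r) h"
    and "\<forall>k<n. \<forall>\<tau><n-m. smooth_on n (box_n n r) (P k \<tau>)"
    and "\<forall>\<tau><n-m. \<forall>\<mu><n-m. smooth_on n (box_n n r) (K \<tau> \<mu>)"
    and "\<forall>\<tau><n-m. \<forall>\<mu><n-m. \<forall>x\<in>box_n n r. K \<tau> \<mu> x = K \<mu> \<tau> x"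
    and "\<forall>k<n. pd k h (\<lambda>_. 0) = 0"
  shows
    "((\<exists>hh. smooth_on n (box_n n r) hh \<and>
           (\<forall>\<mu><n-m. \<forall>x\<in>box_n n r. pd \<mu> hh x = uloc n m h P K \<mu> x))
      \<longleftrightarrow> (\<forall>\<mu><n-m. \<forall>\<nu><n-m. \<forall>x\<in>box_n n r.
             pd \<mu> (uloc n m h P K \<nu>) x = pd \<nu> (uloc n m h P K \<mu>) x))
   \<and>
    ((\<forall>\<mu><n-m. \<forall>\<nu><n-m. \<forall>x\<in>box_n n r.
             pd \<mu> (uloc n m h P K \<nu>) x = pd \<nu> (uloc n m h P K \<mu>) x) \<longrightarrow>
       (\<forall>w. smooth_on n (box_n n r) (hhat n m (uloc n m h P K) w) \<and>
           (\<forall>\<mu><n-m. \<forall>x\<in>box_n n r.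
              pd \<mu> (hhat n m (uloc n m h P K) w) x = uloc n m h P K \<mu> x))
     \<and> (\<forall>\<mu><n-m. \<forall>\<nu><n-m. pd \<mu> (uloc n m h P K \<nu>) (\<lambda>_. 0) =
           (\<Sum>k<n. \<Sum>\<tau><n-m. pd \<mu> (pd k h) (\<lambda>_. 0) * P k \<tau> (\<lambda>_. 0) * K \<tau> \<nu> (\<lambda>_. 0)))
     \<and> ((\<exists>hh. smooth_on n (box_n n r) hh \<and>
           (\<forall>\<mu><n-m. \<forall>x\<in>box_n n r. pd \<mu> hh x = uloc n m h P K \<mu> x) \<and>
           (\<forall>k<n. pd k hh (\<lambda>_. 0) = 0) \<and>
           posdef n (\<lambda>i j. pd i (pd j hh) (\<lambda>_. 0)))
        \<longleftrightarrow> posdef (n-m) (\<lambda>\<mu> \<nu>. pd \<mu> (uloc n m h P K \<nu>) (\<lambda>_. 0)))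
     \<and> (posdef (n-m) (\<lambda>\<mu> \<nu>. pd \<mu> (uloc n m h P K \<nu>) (\<lambda>_. 0)) \<longrightarrow>
         (\<forall>w. w > (1 / lambda_min (n-m) (\<lambda>\<mu> \<nu>. pd \<mu> (uloc n m h P K \<nu>) (\<lambda>_. 0))) *
                  (\<Sum>\<mu><n-m. \<Sum>a<m. (pd (n-m+a) (uloc n m h P K \<mu>) (\<lambda>_. 0))^2)
            \<longrightarrow> (\<forall>k<n. pd k (hhat n m (uloc n m h P K) w) (\<lambda>_. 0) = 0) \<and>
                posdef n (\<lambda>i j. pd i (pd j (hhat n m (uloc n m h P K) w)) (\<lambda>_. 0)))))"
proof -
  interpret bx n r using assms(3) by unfold_locales
  note mn = assms(2)
  let ?u = "uloc n m h P K"
  have z: "(\<lambda>_. 0) \<in> B" by (rule zero_in_box)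
  have sh: "smooth_on n B h" by (rule assms(4))
  have sP: "\<And>k \<tau>. k < n \<Longrightarrow> \<tau> < n - m \<Longrightarrow> smooth_on n B (P k \<tau>)" using assms(5) by blast
  have sK: "\<And>\<tau> \<mu>. \<tau> < n - m \<Longrightarrow> \<mu> < n - m \<Longrightarrow> smooth_on n B (K \<tau> \<mu>)" using assms(6) by blast
  have ueq: "?u \<nu> = (\<lambda>x. \<Sum>k<n. \<Sum>\<tau><n-m. pd k h x * P k \<tau> x * K \<tau> \<nu> x)" for \<nu>
    by (rule ext) (simp add: uloc_def)
  have su: "smooth_on n B (?u \<nu>)" if nu: "\<nu> < n - m" for \<nu>
    unfolding ueq
    by (intro smooth_sum smooth_mult smooth_pd[OF sh] sP sK) (use nu in auto)
  define SYM where "SYM \<longleftrightarrow> (\<forall>\<mu><n-m. \<forall>\<nu><n-m. \<forall>x\<in>B. pd \<mu> (?u \<nu>) x = pd \<nu> (?u \<mu>) x)"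
  have part1: "(\<exists>hh. smooth_on n B hh \<and> (\<forall>\<mu><n-m. \<forall>x\<in>B. pd \<mu> hh x = ?u \<mu> x)) \<longleftrightarrow> SYM"
  proof
    assume "\<exists>hh. smooth_on n B hh \<and> (\<forall>\<mu><n-m. \<forall>x\<in>B. pd \<mu> hh x = ?u \<mu> x)"
    then obtain hh where shh: "smooth_on n B hh" and phh: "\<forall>\<mu><n-m. \<forall>x\<in>B. pd \<mu> hh x = ?u \<mu> x" by blast
    show SYM unfolding SYM_def
    proof (intro allI impI ballI)
      fix \<mu> \<nu> x assume mu: "\<mu> < n - m" and nu: "\<nu> < n - m" and x: "x \<in> B"
      have mun: "\<mu> < n" and nun: "\<nu> < n" using mu nu by auto
      have "pd \<mu> (?u \<nu>) x = pd \<mu> (pd \<nu> hh) x"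
        by (rule pd_cong) (use phh nu x mun in auto)
      also have "\<dots> = pd \<nu> (pd \<mu> hh) x" by (rule clairaut[OF smooth_Dk2[OF shh] nun mun x])
      also have "\<dots> = pd \<nu> (?u \<mu>) x"
        by (rule pd_cong) (use phh mu x nun in auto)
      finally show "pd \<mu> (?u \<nu>) x = pd \<nu> (?u \<mu>) x" .
    qed
  next
    assume S: SYM
    show "\<exists>hh. smooth_on n B hh \<and> (\<forall>\<mu><n-m. \<forall>x\<in>B. pd \<mu> hh x = ?u \<mu> x)"
    proof (intro exI conjI allI impI ballI)
      show "smooth_on n B (hhat n m ?u 0)" by (rule smooth_hhat[OF su])
      fix \<mu> x assume "\<mu> < n - m" "x \<in> B"
      then show "pd \<mu> (hhat n m ?u 0) x = ?u \<mu> x"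
        using pd_hhat[OF mn su S[unfolded SYM_def]] by blast
    qed
  qed
  have prodrule: "pd \<mu> (?u \<nu>) (\<lambda>_. 0) =
     (\<Sum>k<n. \<Sum>\<tau><n-m. pd \<mu> (pd k h) (\<lambda>_. 0) * P k \<tau> (\<lambda>_. 0) * K \<tau> \<nu> (\<lambda>_. 0))"
    if mu: "\<mu> < n - m" and nu: "\<nu> < n - m" for \<mu> \<nu>
  proof -
    have mun: "\<mu> < n" using mu by simp
    have lh: "lineC n r (pd k h)" if "k < n" for k by (rule smooth_lineC[OF smooth_pd[OF sh that]])
    have lP: "lineC n r (P k \<tau>)" if "k < n" "\<tau> < n - m" for k \<tau> by (rule smooth_lineC[OF sP[OF that]])
    have lK: "lineC n r (K \<tau> \<nu>)" if "\<tau> < n - m" for \<tau> by (rule smooth_lineC[OF sK[OF that nu]])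
    have "pd \<mu> (?u \<nu>) (\<lambda>_. 0) = (\<Sum>k<n. pd \<mu> (\<lambda>x. \<Sum>\<tau><n-m. pd k h x * P k \<tau> x * K \<tau> \<nu> x) (\<lambda>_. 0))"
      unfolding ueq
      by (rule pd_sum) (auto intro!: lineC_sum lineC_mult lh lP lK z mun)
    also have "\<dots> = (\<Sum>k<n. \<Sum>\<tau><n-m. pd \<mu> (\<lambda>x. pd k h x * P k \<tau> x * K \<tau> \<nu> x) (\<lambda>_. 0))"
      by (intro sum.cong refl pd_sum) (auto intro!: lineC_mult lh lP lK z mun)
    also have "\<dots> = (\<Sum>k<n. \<Sum>\<tau><n-m. pd \<mu> (pd k h) (\<lambda>_. 0) * P k \<tau> (\<lambda>_. 0) * K \<tau> \<nu> (\<lambda>_. 0))"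
    proof (intro sum.cong refl)
      fix k \<tau> assume k: "k \<in> {..<n}" and t: "\<tau> \<in> {..<n-m}"
      have "pd \<mu> (\<lambda>x. pd k h x * P k \<tau> x * K \<tau> \<nu> x) (\<lambda>_. 0) =
          pd \<mu> (\<lambda>x. pd k h x * P k \<tau> x) (\<lambda>_. 0) * K \<tau> \<nu> (\<lambda>_. 0) + pd k h (\<lambda>_. 0) * P k \<tau> (\<lambda>_. 0) * pd \<mu> (K \<tau> \<nu>) (\<lambda>_. 0)"
        by (rule pd_mult) (use k t in \<open>auto intro!: lineC_mult lh lP lK z mun\<close>)
      also have "pd \<mu> (\<lambda>x. pd k h x * P k \<tau> x) (\<lambda>_. 0) =
          pd \<mu> (pd k h) (\<lambda>_. 0) * P k \<tau> (\<lambda>_. 0) + pd k h (\<lambda>_. 0) * pd \<mu> (P k \<tau>) (\<lambda>_. 0)"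
        by (rule pd_mult) (use k t in \<open>auto intro!: lh lP z mun\<close>)
      finally show "pd \<mu> (\<lambda>x. pd k h x * P k \<tau> x * K \<tau> \<nu> x) (\<lambda>_. 0) =
          pd \<mu> (pd k h) (\<lambda>_. 0) * P k \<tau> (\<lambda>_. 0) * K \<tau> \<nu> (\<lambda>_. 0)"
        using assms(8) k by simp
    qed
    finally show ?thesis .
  qed
  define M where "M = (\<lambda>\<mu> \<nu>. pd \<mu> (?u \<nu>) (\<lambda>_. 0))"
  define Ssum where "Ssum = (\<Sum>\<mu><n-m. \<Sum>a<m. (pd (n-m+a) (?u \<mu>) (\<lambda>_. 0))\<^sup>2)"
  have part4: "(\<forall>k<n. pd k (hhat n m ?u w) (\<lambda>_. 0) = 0) \<and> posdef n (\<lambda>i j. pd i (pd j (hhat n m ?u w)) (\<lambda>_. 0))"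
    if S: SYM and pM: "posdef (n-m) M" and wgt: "w > (1 / lambda_min (n-m) M) * Ssum" for w
  proof -
    define hw where "hw = hhat n m ?u w"
    define N where "N = n - m"
    have nN: "n = N + m" using mn by (simp add: N_def)
    have N0: "0 < N" using mn by (simp add: N_def)
    have shw: "smooth_on n B hw" unfolding hw_def by (rule smooth_hhat[OF su])
    have pdw: "pd \<nu> hw x = ?u \<nu> x" if "\<nu> < N" "x \<in> B" for \<nu> x
      unfolding hw_def using pd_hhat[OF mn su S[unfolded SYM_def]] that by (simp add: N_def)
    define H where "H = (\<lambda>i j. pd i (pd j hw) (\<lambda>_. 0))"
    have Hs: "H i j = H j i" if "i < n" "j < n" for i j
      unfolding H_def by (rule clairaut[OF smooth_Dk2[OF shw] that(2) that(1) z])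
    have Hlow: "H i \<nu> = pd i (?u \<nu>) (\<lambda>_. 0)" if "i < n" "\<nu> < N" for i \<nu>
      unfolding H_def by (rule pd_cong) (use pdw that z in auto)
    have Hhigh: "H (N + a) (N + b) = (if a = b then w else 0)" if "a < m" "b < m" for a b
    proof -
      have i1: "n - m \<le> N + a" "N + a < n" "n - m \<le> N + b" "N + b < n" using that mn by (auto simp: N_def)
      show ?thesis unfolding H_def hw_def by (simp add: hess_high[OF mn i1])
    qed
    have grad: "\<forall>k<n. pd k hw (\<lambda>_. 0) = 0"
    proof (intro allI impI)
      fix k assume k: "k < n"
      show "pd k hw (\<lambda>_. 0) = 0"
      proof (cases "k < N")
        case True
        then have "pd k hw (\<lambda>_. 0) = ?u k (\<lambda>_. 0)" using pdw z by blast
        also have "\<dots> = 0" using assms(8) by (simp add: uloc_def)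
        finally show ?thesis .
      next
        case False
        have "pd k hw (\<lambda>_. 0) = w * (\<lambda>_. 0::real) k" unfolding hw_def
          by (rule pd_hhat_high[OF mn]) (use False k in \<open>auto simp: N_def\<close>)
        then show ?thesis by simp
      qed
    qed
    have symM: "\<forall>i<N. \<forall>j<N. M i j = M j i" using pM unfolding posdef_def N_def by blast
    have lam: "\<forall>x. lambda_min N M * nrm N x \<le> qf N M x" "lambda_min N M > 0"
      using lambda_min_bound[OF N0 symM] pM by (auto simp: N_def)
    define l where "l = lambda_min N M"
    have wl: "w * l > Ssum" using wgt lam(2) by (simp add: l_def N_def field_simps)
    have Spos: "Ssum \<ge> 0" unfolding Ssum_def by (intro sum_nonneg) auto
    have "posdef n H"
      unfolding posdef_def
    proof (intro conjI allI impI)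
      fix i j assume "i < n" "j < n" then show "H i j = H j i" by (rule Hs)
    next
      fix v :: "nat \<Rightarrow> real" assume vnz: "\<exists>i<n. v i \<noteq> 0"
      define c where "c = (\<lambda>a \<nu>. pd (N + a) (?u \<nu>) (\<lambda>_. 0))"
      define y where "y = (\<lambda>a. v (N + a))"
      define T where "T = (\<Sum>a<m. \<Sum>\<nu><N. y a * c a \<nu> * v \<nu>)"
      have B1: "(\<Sum>i<N. \<Sum>j<N. v i * H i j * v j) = qf N M v"
        unfolding qf_def M_def using Hlow nN by (intro sum.cong refl) auto
      have B2: "(\<Sum>i<N. \<Sum>b<m. v i * H i (N + b) * v (N + b)) = T"
      proof -
        have "(\<Sum>i<N. \<Sum>b<m. v i * H i (N + b) * v (N + b)) = (\<Sum>i<N. \<Sum>b<m. y b * c b i * v i)"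
        proof (intro sum.cong refl)
          fix i b assume "i \<in> {..<N}" "b \<in> {..<m}"
          then have "H i (N + b) = c b i" using Hs[of i "N + b"] Hlow[of "N + b" i] nN by (simp add: c_def)
          then show "v i * H i (N + b) * v (N + b) = y b * c b i * v i" by (simp add: y_def)
        qed
        also have "\<dots> = T" unfolding T_def by (rule sum.swap)
        finally show ?thesis .
      qed
      have B3: "(\<Sum>a<m. \<Sum>j<N. v (N + a) * H (N + a) j * v j) = T"
        unfolding T_def y_def c_def using Hlow nN by (intro sum.cong refl) auto
      have B4: "(\<Sum>a<m. \<Sum>b<m. v (N + a) * H (N + a) (N + b) * v (N + b)) = w * nrm m y"
      proof -
        have "(\<Sum>a<m. \<Sum>b<m. v (N + a) * H (N + a) (N + b) * v (N + b)) = (\<Sum>a<m. w * (y a)\<^sup>2)"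
        proof (intro sum.cong refl)
          fix a assume a: "a \<in> {..<m}"
          have "(\<Sum>b<m. v (N + a) * H (N + a) (N + b) * v (N + b)) = (\<Sum>b<m. if b = a then w * (y a)\<^sup>2 else 0)"
            using a Hhigh by (intro sum.cong refl) (auto simp: y_def power2_eq_square)
          also have "\<dots> = w * (y a)\<^sup>2" using a by simp
          finally show "(\<Sum>b<m. v (N + a) * H (N + a) (N + b) * v (N + b)) = w * (y a)\<^sup>2" .
        qed
        then show ?thesis by (simp add: nrm_def sum_distrib_left)
      qed
      have tot: "(\<Sum>i<n. \<Sum>j<n. v i * H i j * v j) = qf N M v + 2 * T + w * nrm m y"
      proof -
        have "(\<Sum>i<n. \<Sum>j<n. v i * H i j * v j) =
            (\<Sum>i<N. \<Sum>j<N. v i * H i j * v j) + (\<Sum>i<N. \<Sum>b<m. v i * H i (N + b) * v (N + b))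
          + ((\<Sum>a<m. \<Sum>j<N. v (N + a) * H (N + a) j * v j) + (\<Sum>a<m. \<Sum>b<m. v (N + a) * H (N + a) (N + b) * v (N + b)))"
          unfolding nN sum_split_nat by (simp add: sum.distrib)
        then show ?thesis using B1 B2 B3 B4 by simp
      qed
      have CS: "T\<^sup>2 \<le> Ssum * nrm N v * nrm m y"
      proof -
        have "T\<^sup>2 \<le> (\<Sum>\<nu><N. \<Sum>a<m. (c a \<nu>)\<^sup>2) * (\<Sum>\<nu><N. (v \<nu>)\<^sup>2) * (\<Sum>a<m. (y a)\<^sup>2)"
          unfolding T_def by (rule cs2)
        then show ?thesis by (simp add: Ssum_def c_def nrm_def N_def)
      qed
      have XY: "nrm N v + nrm m y > 0"
      proof -
        obtain i where i: "i < n" "v i \<noteq> 0" using vnz by blast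
        show ?thesis
        proof (cases "i < N")
          case True
          then have "nrm N v \<noteq> 0" using i nrm_zero by blast
          then show ?thesis using nrm_nonneg[of N v] nrm_nonneg[of m y] by linarith
        next
          case False
          then obtain a where a: "i = N + a" "a < m" using i nN by (metis add_diff_inverse_nat add_less_cancel_left)
          then have "nrm m y \<noteq> 0" using i nrm_zero[of m y a] by (auto simp: y_def)
          then show ?thesis using nrm_nonneg[of N v] nrm_nonneg[of m y] by linarith
        qed
      qed
      have "l * nrm N v + 2 * T + w * nrm m y > 0"
        by (rule quad_pos[OF _ wl Spos nrm_nonneg nrm_nonneg XY CS]) (use lam in \<open>simp add: l_def\<close>)
      moreover have "l * nrm N v \<le> qf N M v" using lam(1) by (simp add: l_def)
      ultimately show "(\<Sum>i<n. \<Sum>j<n. v i * H i j * v j) > 0" unfolding tot by linarith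
    qed
    then show ?thesis using grad unfolding hw_def H_def by simp
  qed
  have part3: "(\<exists>hh. smooth_on n B hh \<and> (\<forall>\<mu><n-m. \<forall>x\<in>B. pd \<mu> hh x = ?u \<mu> x) \<and>
           (\<forall>k<n. pd k hh (\<lambda>_. 0) = 0) \<and> posdef n (\<lambda>i j. pd i (pd j hh) (\<lambda>_. 0)))
        \<longleftrightarrow> posdef (n-m) M" if S: SYM
  proof
    assume "\<exists>hh. smooth_on n B hh \<and> (\<forall>\<mu><n-m. \<forall>x\<in>B. pd \<mu> hh x = ?u \<mu> x) \<and>
           (\<forall>k<n. pd k hh (\<lambda>_. 0) = 0) \<and> posdef n (\<lambda>i j. pd i (pd j hh) (\<lambda>_. 0))"
    then obtain hh where phh: "\<forall>\<mu><n-m. \<forall>x\<in>B. pd \<mu> hh x = ?u \<mu> x"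
      and pdh: "posdef n (\<lambda>i j. pd i (pd j hh) (\<lambda>_. 0))" by blast
    define N where "N = n - m"
    have nN: "n = N + m" using mn by (simp add: N_def)
    have MH: "M i j = pd i (pd j hh) (\<lambda>_. 0)" if "i < N" "j < N" for i j
      unfolding M_def by (rule pd_cong) (use phh that z mn in \<open>auto simp: N_def\<close>)
    show "posdef (n-m) M"
      unfolding posdef_def N_def[symmetric]
    proof (intro conjI allI impI)
      fix i j assume "i < N" "j < N"
      then show "M i j = M j i" using pdh MH nN unfolding posdef_def by auto
    next
      fix v :: "nat \<Rightarrow> real" assume vnz: "\<exists>i<N. v i \<noteq> 0"
      define v' where "v' = (\<lambda>i. if i < N then v i else 0)"
      have "\<exists>i<n. v' i \<noteq> 0" using vnz nN by (auto simp: v'_def)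
      then have "(\<Sum>i<n. \<Sum>j<n. v' i * pd i (pd j hh) (\<lambda>_. 0) * v' j) > 0"
        using pdh unfolding posdef_def by blast
      also have "(\<Sum>i<n. \<Sum>j<n. v' i * pd i (pd j hh) (\<lambda>_. 0) * v' j) = (\<Sum>i<N. \<Sum>j<N. v i * M i j * v j)"
        unfolding nN sum_split_nat by (simp add: v'_def MH)
      finally show "(\<Sum>i<N. \<Sum>j<N. v i * M i j * v j) > 0" .
    qed
  next
    assume pM: "posdef (n-m) M"
    define w0 where "w0 = (1 / lambda_min (n-m) M) * Ssum + 1"
    have "(\<forall>k<n. pd k (hhat n m ?u w0) (\<lambda>_. 0) = 0) \<and> posdef n (\<lambda>i j. pd i (pd j (hhat n m ?u w0)) (\<lambda>_. 0))"
      by (rule part4[OF S pM]) (simp add: w0_def)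
    moreover have "smooth_on n B (hhat n m ?u w0)" by (rule smooth_hhat[OF su])
    moreover have "\<forall>\<mu><n-m. \<forall>x\<in>B. pd \<mu> (hhat n m ?u w0) x = ?u \<mu> x"
      using pd_hhat[OF mn su S[unfolded SYM_def]] by blast
    ultimately show "\<exists>hh. smooth_on n B hh \<and> (\<forall>\<mu><n-m. \<forall>x\<in>B. pd \<mu> hh x = ?u \<mu> x) \<and>
           (\<forall>k<n. pd k hh (\<lambda>_. 0) = 0) \<and> posdef n (\<lambda>i j. pd i (pd j hh) (\<lambda>_. 0))" by blast
  qed
  have P2: "((\<forall>\<mu><n-m. \<forall>\<nu><n-m. \<forall>x\<in>box_n n r.
             pd \<mu> (?u \<nu>) x = pd \<nu> (?u \<mu>) x) \<longrightarrow>
       (\<forall>w. smooth_on n (box_n n r) (hhat n m (?u) w) \<and>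
           (\<forall>\<mu><n-m. \<forall>x\<in>box_n n r.
              pd \<mu> (hhat n m (?u) w) x = ?u \<mu> x))
     \<and> (\<forall>\<mu><n-m. \<forall>\<nu><n-m. pd \<mu> (?u \<nu>) (\<lambda>_. 0) =
           (\<Sum>k<n. \<Sum>\<tau><n-m. pd \<mu> (pd k h) (\<lambda>_. 0) * P k \<tau> (\<lambda>_. 0) * K \<tau> \<nu> (\<lambda>_. 0)))
     \<and> ((\<exists>hh. smooth_on n (box_n n r) hh \<and>
           (\<forall>\<mu><n-m. \<forall>x\<in>box_n n r. pd \<mu> hh x = ?u \<mu> x) \<and>
           (\<forall>k<n. pd k hh (\<lambda>_. 0) = 0) \<and>
           posdef n (\<lambda>i j. pd i (pd j hh) (\<lambda>_. 0)))
        \<longleftrightarrow> posdef (n-m) (\<lambda>\<mu> \<nu>. pd \<mu> (?u \<nu>) (\<lambda>_. 0)))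
     \<and> (posdef (n-m) (\<lambda>\<mu> \<nu>. pd \<mu> (?u \<nu>) (\<lambda>_. 0)) \<longrightarrow>
         (\<forall>w. w > (1 / lambda_min (n-m) (\<lambda>\<mu> \<nu>. pd \<mu> (?u \<nu>) (\<lambda>_. 0))) *
                  (\<Sum>\<mu><n-m. \<Sum>a<m. (pd (n-m+a) (?u \<mu>) (\<lambda>_. 0))^2)
            \<longrightarrow> (\<forall>k<n. pd k (hhat n m (?u) w) (\<lambda>_. 0) = 0) \<and>
                posdef n (\<lambda>i j. pd i (pd j (hhat n m (?u) w)) (\<lambda>_. 0)))))"
  proof (rule impI)
    assume S0: "\<forall>\<mu><n-m. \<forall>\<nu><n-m. \<forall>x\<in>box_n n r. pd \<mu> (?u \<nu>) x = pd \<nu> (?u \<mu>) x"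
    then have S: SYM by (simp add: SYM_def)
    have c1: "\<forall>w. smooth_on n B (hhat n m ?u w) \<and> (\<forall>\<mu><n-m. \<forall>x\<in>B. pd \<mu> (hhat n m ?u w) x = ?u \<mu> x)"
    proof (intro allI conjI impI ballI)
      fix w show "smooth_on n B (hhat n m ?u w)" by (rule smooth_hhat[OF su])
      fix \<mu> x assume "\<mu> < n - m" "x \<in> B"
      then show "pd \<mu> (hhat n m ?u w) x = ?u \<mu> x" using pd_hhat[OF mn su S[unfolded SYM_def]] by blast
    qed
    have c2: "\<forall>\<mu><n-m. \<forall>\<nu><n-m. pd \<mu> (?u \<nu>) (\<lambda>_. 0) =
        (\<Sum>k<n. \<Sum>\<tau><n-m. pd \<mu> (pd k h) (\<lambda>_. 0) * P k \<tau> (\<lambda>_. 0) * K \<tau> \<nu> (\<lambda>_. 0))"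
      using prodrule by blast
    have c3: "(\<exists>hh. smooth_on n B hh \<and> (\<forall>\<mu><n-m. \<forall>x\<in>B. pd \<mu> hh x = ?u \<mu> x) \<and>
           (\<forall>k<n. pd k hh (\<lambda>_. 0) = 0) \<and> posdef n (\<lambda>i j. pd i (pd j hh) (\<lambda>_. 0)))
        \<longleftrightarrow> posdef (n-m) (\<lambda>\<mu> \<nu>. pd \<mu> (?u \<nu>) (\<lambda>_. 0))"
      using part3[OF S] by (simp add: M_def)
    have c4: "posdef (n-m) (\<lambda>\<mu> \<nu>. pd \<mu> (?u \<nu>) (\<lambda>_. 0)) \<longrightarrow>
         (\<forall>w. w > (1 / lambda_min (n-m) (\<lambda>\<mu> \<nu>. pd \<mu> (?u \<nu>) (\<lambda>_. 0))) *
                  (\<Sum>\<mu><n-m. \<Sum>a<m. (pd (n-m+a) (?u \<mu>) (\<lambda>_. 0))^2)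
            \<longrightarrow> (\<forall>k<n. pd k (hhat n m ?u w) (\<lambda>_. 0) = 0) \<and>
                posdef n (\<lambda>i j. pd i (pd j (hhat n m ?u w)) (\<lambda>_. 0)))"
      using part4[OF S] by (simp add: M_def Ssum_def)
    show "(\<forall>w. smooth_on n (box_n n r) (hhat n m (?u) w) \<and>
           (\<forall>\<mu><n-m. \<forall>x\<in>box_n n r.
              pd \<mu> (hhat n m (?u) w) x = ?u \<mu> x))
     \<and> (\<forall>\<mu><n-m. \<forall>\<nu><n-m. pd \<mu> (?u \<nu>) (\<lambda>_. 0) =
           (\<Sum>k<n. \<Sum>\<tau><n-m. pd \<mu> (pd k h) (\<lambda>_. 0) * P k \<tau> (\<lambda>_. 0) * K \<tau> \<nu> (\<lambda>_. 0)))
     \<and> ((\<exists>hh. smooth_on n (box_n n r) hh \<and>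
           (\<forall>\<mu><n-m. \<forall>x\<in>box_n n r. pd \<mu> hh x = ?u \<mu> x) \<and>
           (\<forall>k<n. pd k hh (\<lambda>_. 0) = 0) \<and>
           posdef n (\<lambda>i j. pd i (pd j hh) (\<lambda>_. 0)))
        \<longleftrightarrow> posdef (n-m) (\<lambda>\<mu> \<nu>. pd \<mu> (?u \<nu>) (\<lambda>_. 0)))
     \<and> (posdef (n-m) (\<lambda>\<mu> \<nu>. pd \<mu> (?u \<nu>) (\<lambda>_. 0)) \<longrightarrow>
         (\<forall>w. w > (1 / lambda_min (n-m) (\<lambda>\<mu> \<nu>. pd \<mu> (?u \<nu>) (\<lambda>_. 0))) *
                  (\<Sum>\<mu><n-m. \<Sum>a<m. (pd (n-m+a) (?u \<mu>) (\<lambda>_. 0))^2)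
            \<longrightarrow> (\<forall>k<n. pd k (hhat n m (?u) w) (\<lambda>_. 0) = 0) \<and>
                posdef n (\<lambda>i j. pd i (pd j (hhat n m (?u) w)) (\<lambda>_. 0))))"
      using c1 c2 c3 c4 by blast
  qed
  show ?thesis using part1 P2 unfolding SYM_def by blast
qed

end
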